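(* Fix $\lambda\in(0,\infty)$ and positive integers $n,m$. Let $\mathcal{M}$ be the set of $n\times m$ matrices with all entries positive, and let $\Delta^+_n$ and $\Delta^+_m$ be the sets of probability vectors of length $n$ and $m$ with all entries positive. Define $\Phi:\mathcal{M}\times\Delta^+_n\times\Delta^+_m\to\mathcal{M}$ by letting $\Phi(M,\mathbf{r},\mathbf{c})$ be the limit of $(\mathbf{r},\mathbf{c})$-Sinkhorn scaling applied to the matrix $M^{[\lambda]}$. Then $\Phi$ is $C^\infty$.
   Context: $M^{[\lambda]}$ denotes the matrix with entries $(M_{ij})^{\lambda}$. $(\mathbf{r},\mathbf{c})$-Sinkhorn scaling of a non-negative matrix $A$ is the iterated alternation of rescaling each row $i$ so that its sum equals $r_i$ and rescaling each column $j$ so that its sum equals $c_j$; for positive matrices and positive probability vectors this converges to the unique matrix of the form $D_1 A D_2$ ($D_1,D_2$ positive diagonal) with row sums $\mathbf{r}$ and column sums $\mathbf{c}$. $\Delta^+_n\times\Delta^+_m$ is regarded as an open subset of the product of the affine hyperplanes $\{\sum_i r_i=1\}$, $\{\sum_j c_j=1\}$. *)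

theory Defs
  imports "HOL-Analysis.Analysis"
begin

text \<open>A function is C-infinity on S if all iterated (Frechet) derivatives exist
  on S and are continuous.  Since iterated derivatives change type, we phrase this
  via directional derivatives: there is a family F of functions containing f, all
  continuous on S, closed under taking directional derivatives x \<mapsto> g' x v, where
  g' x is a Frechet derivative of g at x within S.  In finite dimensions this is
  exactly C-infinity.  Derivatives are taken within S, so S may be a relatively
  open subset of an affine subspace.\<close>

definition smooth_on :: "'a::euclidean_space set \<Rightarrow> ('a \<Rightarrow> 'b::real_normed_vector) \<Rightarrow> bool" where
  "smooth_on S f \<longleftrightarrow>
     (\<exists>F. f \<in> F \<and>
          (\<forall>g\<in>F. continuous_on S g \<and>
             (\<exists>g'. (\<forall>x\<in>S. (g has_derivative g' x) (at x within S)) \<and>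
                   (\<forall>v. (\<lambda>x. g' x v) \<in> F))))"

definition pos_matrices :: "(real^'m^'n) set" where
  "pos_matrices = {M. \<forall>i j. M $ i $ j > 0}"

definition pos_simplex :: "(real^'n) set" where
  "pos_simplex = {r. (\<forall>i. r $ i > 0) \<and> (\<Sum>i\<in>UNIV. r $ i) = 1}"

definition entry_pow :: "real \<Rightarrow> real^'m^'n \<Rightarrow> real^'m^'n" where
  "entry_pow lam M = (\<chi> i j. (M $ i $ j) powr lam)"

definition row_scale :: "real^'n \<Rightarrow> real^'m^'n \<Rightarrow> real^'m^'n" where
  "row_scale r A = (\<chi> i j. r $ i * A $ i $ j / (\<Sum>k\<in>UNIV. A $ i $ k))"

definition col_scale :: "real^'m \<Rightarrow> real^'m^'n \<Rightarrow> real^'m^'n" where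
  "col_scale c A = (\<chi> i j. c $ j * A $ i $ j / (\<Sum>k\<in>UNIV. A $ k $ j))"

primrec sinkhorn_iter :: "real^'n \<Rightarrow> real^'m \<Rightarrow> real^'m^'n \<Rightarrow> nat \<Rightarrow> real^'m^'n" where
  "sinkhorn_iter r c A 0 = A"
| "sinkhorn_iter r c A (Suc k) = col_scale c (row_scale r (sinkhorn_iter r c A k))"

definition sinkhorn_limit :: "real^'n \<Rightarrow> real^'m \<Rightarrow> real^'m^'n \<Rightarrow> real^'m^'n" where
  "sinkhorn_limit r c A = lim (sinkhorn_iter r c A)"

definition Phi :: "real \<Rightarrow> (real^'m^'n) \<times> (real^'n) \<times> (real^'m) \<Rightarrow> real^'m^'n" where
  "Phi lam = (\<lambda>(M, r, c). sinkhorn_limit r c (entry_pow lam M))"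

end

theory Submission
  imports Defs
begin


lemma smooth_onD:
  assumes "smooth_on S f"
  shows "continuous_on S f"
    "\<exists>f'. (\<forall>x\<in>S. (f has_derivative f' x) (at x within S)) \<and> (\<forall>v. smooth_on S (\<lambda>x. f' x v))"
proof -
  from assms obtain F where F: "f \<in> F" and F2: "\<forall>g\<in>F. continuous_on S g \<and>
             (\<exists>g'. (\<forall>x\<in>S. (g has_derivative g' x) (at x within S)) \<and> (\<forall>v. (\<lambda>x. g' x v) \<in> F))"
    unfolding smooth_on_def by (elim exE conjE)
  show "continuous_on S f" using F F2 by simp
  from F2 F obtain f' where f': "\<forall>x\<in>S. (f has_derivative f' x) (at x within S)" "\<forall>v. (\<lambda>x. f' x v) \<in> F"
    by (meson)
  have "smooth_on S (\<lambda>x. f' x v)" for v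
    unfolding smooth_on_def using F2 f' by (intro exI[of _ F] conjI) auto
  with f' show "\<exists>f'. (\<forall>x\<in>S. (f has_derivative f' x) (at x within S)) \<and> (\<forall>v. smooth_on S (\<lambda>x. f' x v))"
    by blast
qed
lemma deriv_cont_on:
  assumes "\<forall>x\<in>S. (g has_derivative g' x) (at x within S)"
  shows "continuous_on S g"
  using assms continuous_on_eq_continuous_within has_derivative_continuous by blast

inductive_set smc :: "'a::euclidean_space set \<Rightarrow> ('a \<Rightarrow> 'b::real_normed_vector) set \<Rightarrow> ('a \<Rightarrow> 'b) set"
  for S F where
  base: "g \<in> F \<Longrightarrow> g \<in> smc S F"
| sm: "smooth_on S g \<Longrightarrow> g \<in> smc S F"
| add: "g \<in> smc S F \<Longrightarrow> h \<in> smc S F \<Longrightarrow> (\<lambda>x. g x + h x) \<in> smc S F"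
| scale: "g \<in> smc S F \<Longrightarrow> (\<lambda>x. c *\<^sub>R g x) \<in> smc S F"
| cong: "g \<in> smc S F \<Longrightarrow> (\<And>x. x \<in> S \<Longrightarrow> h x = g x) \<Longrightarrow> h \<in> smc S F"

lemma smc_smooth:
  assumes F: "\<And>g. g\<in>F \<Longrightarrow> \<exists>g'. (\<forall>x\<in>S. (g has_derivative g' x) (at x within S)) \<and> (\<forall>v. (\<lambda>x. g' x v) \<in> smc S F)"
    and h: "h \<in> smc S F"
  shows "smooth_on S h"
proof -
  have P: "\<exists>g'. (\<forall>x\<in>S. (g has_derivative g' x) (at x within S)) \<and> (\<forall>v. (\<lambda>x. g' x v) \<in> smc S F)"
    if "g \<in> smc S F" for g
    using that
  proof (induction rule: smc.induct)
    case (base g)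
    then show ?case using F by blast
  next
    case (sm g)
    then show ?case using smooth_onD(2)[OF sm] smc.sm by blast
  next
    case (add g h)
    then obtain g' h' where g': "\<forall>x\<in>S. (g has_derivative g' x) (at x within S)" "\<forall>v. (\<lambda>x. g' x v) \<in> smc S F"
      and h': "\<forall>x\<in>S. (h has_derivative h' x) (at x within S)" "\<forall>v. (\<lambda>x. h' x v) \<in> smc S F"
      by blast
    show ?case
      apply (rule exI[of _ "\<lambda>x v. g' x v + h' x v"])
      using g' h' by (auto intro!: has_derivative_add smc.add)
  next
    case (scale g c)
    then obtain g' where g': "\<forall>x\<in>S. (g has_derivative g' x) (at x within S)" "\<forall>v. (\<lambda>x. g' x v) \<in> smc S F"
      by blast
    show ?case
      apply (rule exI[of _ "\<lambda>x v. c *\<^sub>R g' x v"])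
      using g' by (auto intro!: has_derivative_scaleR_right smc.scale)
  next
    case (cong g h)
    then obtain g' where g': "\<forall>x\<in>S. (g has_derivative g' x) (at x within S)" "\<forall>v. (\<lambda>x. g' x v) \<in> smc S F"
      by blast
    show ?case
      apply (rule exI[of _ g'])
      using g' cong.hyps(2)
      by (auto intro!: has_derivative_transform_within[where d=1, of g _ _ S h])
  qed
  show ?thesis
    unfolding smooth_on_def
    apply (rule exI[of _ "smc S F"])
    using P h deriv_cont_on by blast
qed

lemma smooth_on_const[simp, intro]:
  fixes S :: "'a::euclidean_space set" and c :: "'b::real_normed_vector"
  shows "smooth_on S (\<lambda>x. c)"
proof -
  define F where "F = range (\<lambda>c::'b. \<lambda>x::'a. c)"
  have "\<forall>g\<in>F. continuous_on S g \<and>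
             (\<exists>g'. (\<forall>x\<in>S. (g has_derivative g' x) (at x within S)) \<and> (\<forall>v. (\<lambda>x. g' x v) \<in> F))"
  proof
    fix g assume "g \<in> F"
    then obtain d where d: "g = (\<lambda>x. d)" unfolding F_def by auto
    have "(\<lambda>x. 0) \<in> F" unfolding F_def by (rule range_eqI[of _ _ 0]) simp
    then show "continuous_on S g \<and>
             (\<exists>g'. (\<forall>x\<in>S. (g has_derivative g' x) (at x within S)) \<and> (\<forall>v. (\<lambda>x. g' x v) \<in> F))"
      unfolding d by (intro conjI continuous_on_const exI[of _ "\<lambda>x v. 0"] ballI allI has_derivative_const)
  qed
  moreover have "(\<lambda>x. c) \<in> F" unfolding F_def by simp
  ultimately show ?thesis unfolding smooth_on_def by (intro exI[of _ F] conjI)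
qed

lemma smooth_on_linear:
  assumes "bounded_linear f"
  shows "smooth_on S f"
proof -
  have "f \<in> smc S {f}" by (rule smc.base) simp
  moreover have "\<exists>g'. (\<forall>x\<in>S. (g has_derivative g' x) (at x within S)) \<and> (\<forall>v. (\<lambda>x. g' x v) \<in> smc S {f})"
    if "g \<in> {f}" for g
    using that assms
    by (auto intro!: exI[of _ "\<lambda>x. f"] smc.sm bounded_linear_imp_has_derivative)
  ultimately show ?thesis by (rule smc_smooth[rotated])
qed

lemma smooth_on_id[simp, intro]: "smooth_on S (\<lambda>x. x)"
  by (rule smooth_on_linear) (rule bounded_linear_ident)

lemma smooth_on_add:
  assumes "smooth_on S f" "smooth_on S g"
  shows "smooth_on S (\<lambda>x. f x + g x)"
proof (rule smc_smooth)
  show "(\<lambda>x. f x + g x) \<in> smc S {}" by (intro smc.add smc.sm assms)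
qed simp

lemma smooth_on_scaleR_const:
  assumes "smooth_on S f"
  shows "smooth_on S (\<lambda>x. c *\<^sub>R f x)"
proof (rule smc_smooth)
  show "(\<lambda>x. c *\<^sub>R f x) \<in> smc S {}" by (intro smc.scale smc.sm assms)
qed simp

lemma smooth_on_cong:
  assumes "smooth_on S f" "\<And>x. x \<in> S \<Longrightarrow> g x = f x"
  shows "smooth_on S g"
proof (rule smc_smooth)
  show "g \<in> smc S {}" by (rule smc.cong[OF smc.sm[OF assms(1)]]) (use assms(2) in auto)
qed simp

lemma smooth_on_subset:
  assumes "smooth_on S f" "T \<subseteq> S"
  shows "smooth_on T f"
proof -
  obtain F where F: "f \<in> F" "\<forall>g\<in>F. continuous_on S g \<and>
             (\<exists>g'. (\<forall>x\<in>S. (g has_derivative g' x) (at x within S)) \<and> (\<forall>v. (\<lambda>x. g' x v) \<in> F))"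
    using assms unfolding smooth_on_def by blast
  have "\<forall>g\<in>F. continuous_on T g \<and>
             (\<exists>g'. (\<forall>x\<in>T. (g has_derivative g' x) (at x within T)) \<and> (\<forall>v. (\<lambda>x. g' x v) \<in> F))"
  proof
    fix g assume "g \<in> F"
    then obtain g' where "continuous_on S g" "\<forall>x\<in>S. (g has_derivative g' x) (at x within S)" "\<forall>v. (\<lambda>x. g' x v) \<in> F"
      using F by blast
    then show "continuous_on T g \<and>
             (\<exists>g'. (\<forall>x\<in>T. (g has_derivative g' x) (at x within T)) \<and> (\<forall>v. (\<lambda>x. g' x v) \<in> F))"
      using assms(2) continuous_on_subset[of S g T] by (intro conjI exI[of _ g']) (auto intro: has_derivative_subset)
  qed
  then show ?thesis unfolding smooth_on_def using F(1) by blast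
qed

lemma smooth_on_neg:
  assumes "smooth_on S f"
  shows "smooth_on S (\<lambda>x. - f x)"
  using smooth_on_scaleR_const[OF assms, of "-1"] by simp

lemma smooth_on_diff:
  assumes "smooth_on S f" "smooth_on S g"
  shows "smooth_on S (\<lambda>x. f x - g x)"
  using smooth_on_add[OF assms(1) smooth_on_neg[OF assms(2)]] by simp

lemma smc_sum:
  assumes "finite I" "\<And>i. i \<in> I \<Longrightarrow> g i \<in> smc S F"
  shows "(\<lambda>x. \<Sum>i\<in>I. g i x) \<in> smc S F"
  using assms
proof (induction I rule: finite_induct)
  case empty
  then show ?case by (auto intro: smc.sm)
next
  case (insert a I)
  then show ?case by (auto intro!: smc.add)
qed

lemma smooth_on_sum:
  assumes "finite I" "\<And>i. i \<in> I \<Longrightarrow> smooth_on S (f i)"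
  shows "smooth_on S (\<lambda>x. \<Sum>i\<in>I. f i x)"
proof (rule smc_smooth)
  show "(\<lambda>x. \<Sum>i\<in>I. f i x) \<in> smc S {}" by (rule smc_sum) (use assms in \<open>auto intro: smc.sm\<close>)
qed simp

lemma smooth_on_bilinear:
  assumes bl: "bounded_bilinear pr" and f: "smooth_on S f" and g: "smooth_on S g"
  shows "smooth_on S (\<lambda>x. pr (f x) (g x))"
proof -
  define F where "F = {h. \<exists>a b. smooth_on S a \<and> smooth_on S b \<and> h = (\<lambda>x. pr (a x) (b x))}"
  have "\<exists>h'. (\<forall>x\<in>S. (h has_derivative h' x) (at x within S)) \<and> (\<forall>v. (\<lambda>x. h' x v) \<in> smc S F)"
    if "h \<in> F" for h
  proof -
    from that obtain a b where ab: "smooth_on S a" "smooth_on S b" "h = (\<lambda>x. pr (a x) (b x))"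
      unfolding F_def by blast
    obtain a' where a': "\<forall>x\<in>S. (a has_derivative a' x) (at x within S)" "\<forall>v. smooth_on S (\<lambda>x. a' x v)"
      using smooth_onD(2)[OF ab(1)] by blast
    obtain b' where b': "\<forall>x\<in>S. (b has_derivative b' x) (at x within S)" "\<forall>v. smooth_on S (\<lambda>x. b' x v)"
      using smooth_onD(2)[OF ab(2)] by blast
    show ?thesis
      apply (rule exI[of _ "\<lambda>x v. pr (a x) (b' x v) + pr (a' x v) (b x)"])
    proof (intro conjI ballI allI)
      fix x assume "x \<in> S"
      then show "(h has_derivative (\<lambda>v. pr (a x) (b' x v) + pr (a' x v) (b x))) (at x within S)"
        using a' b' ab(3) by (auto intro!: bounded_bilinear.FDERIV[OF bl])
    next
      fix v
      show "(\<lambda>x. pr (a x) (b' x v) + pr (a' x v) (b x)) \<in> smc S F"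
      proof (rule smc.add; rule smc.base)
        show "(\<lambda>x. pr (a x) (b' x v)) \<in> F" unfolding F_def using ab a' b' by blast
        show "(\<lambda>x. pr (a' x v) (b x)) \<in> F" unfolding F_def using ab a' b' by blast
      qed
    qed
  qed
  moreover have "(\<lambda>x. pr (f x) (g x)) \<in> smc S F"
    by (rule smc.base) (use f g in \<open>auto simp: F_def\<close>)
  ultimately show ?thesis by (rule smc_smooth)
qed

lemma smooth_on_mult:
  fixes f g :: "'a::euclidean_space \<Rightarrow> 'b::real_normed_algebra"
  assumes "smooth_on S f" "smooth_on S g"
  shows "smooth_on S (\<lambda>x. f x * g x)"
  by (rule smooth_on_bilinear[OF bounded_bilinear_mult assms])

lemma smooth_on_scaleR:
  assumes "smooth_on S f" "smooth_on S g"
  shows "smooth_on S (\<lambda>x. f x *\<^sub>R g x)"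
  by (rule smooth_on_bilinear[OF bounded_bilinear_scaleR assms])

lemma smooth_on_inner:
  assumes "smooth_on S f" "smooth_on S g"
  shows "smooth_on S (\<lambda>x. inner (f x) (g x))"
  by (rule smooth_on_bilinear[OF bounded_bilinear_inner assms])

lemma smooth_on_prod:
  fixes f :: "'i \<Rightarrow> 'a::euclidean_space \<Rightarrow> 'b::{real_normed_algebra, comm_ring_1}"
  assumes "finite I" "\<And>i. i \<in> I \<Longrightarrow> smooth_on S (f i)"
  shows "smooth_on S (\<lambda>x. \<Prod>i\<in>I. f i x)"
  using assms
proof (induction I rule: finite_induct)
  case empty
  then show ?case by simp
next
  case (insert a I)
  then show ?case by (auto intro!: smooth_on_mult)
qed

lemma smooth_on_linear_comp:
  assumes "bounded_linear l" "smooth_on S f"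
  shows "smooth_on S (\<lambda>x. l (f x))"
proof -
  define F where "F = {h. \<exists>a. smooth_on S a \<and> h = (\<lambda>x. l (a x))}"
  have "\<exists>h'. (\<forall>x\<in>S. (h has_derivative h' x) (at x within S)) \<and> (\<forall>v. (\<lambda>x. h' x v) \<in> smc S F)"
    if "h \<in> F" for h
  proof -
    from that obtain a where a: "smooth_on S a" "h = (\<lambda>x. l (a x))"
      unfolding F_def by blast
    obtain a' where a': "\<forall>x\<in>S. (a has_derivative a' x) (at x within S)" "\<forall>v. smooth_on S (\<lambda>x. a' x v)"
      using smooth_onD(2)[OF a(1)] by blast
    show ?thesis
      apply (rule exI[of _ "\<lambda>x v. l (a' x v)"])
    proof (intro conjI ballI allI)
      fix x assume "x \<in> S"
      then show "(h has_derivative (\<lambda>v. l (a' x v))) (at x within S)"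
        unfolding a(2) using a' assms(1) by (simp add: bounded_linear.has_derivative)
    next
      fix v
      show "(\<lambda>x. l (a' x v)) \<in> smc S F"
        by (rule smc.base) (unfold F_def, use a' in blast)
    qed
  qed
  moreover have "(\<lambda>x. l (f x)) \<in> smc S F"
    by (rule smc.base) (unfold F_def, use assms(2) in blast)
  ultimately show ?thesis by (rule smc_smooth)
qed

lemma smooth_on_compose:
  fixes f :: "'a::euclidean_space \<Rightarrow> 'c::euclidean_space" and k :: "'c \<Rightarrow> 'b::real_normed_vector"
  assumes k: "smooth_on U k" and f: "smooth_on S f" and fS: "f ` S \<subseteq> U"
  shows "smooth_on S (\<lambda>x. k (f x))"
proof -
  obtain f' where f': "\<forall>x\<in>S. (f has_derivative f' x) (at x within S)" "\<forall>v. smooth_on S (\<lambda>x. f' x v)"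
    using smooth_onD(2)[OF f] by blast
  define F where "F = {h. \<exists>s (k::'c\<Rightarrow>'b). smooth_on S (s::'a\<Rightarrow>real) \<and> smooth_on U k \<and> h = (\<lambda>x. s x *\<^sub>R k (f x))}"
  have Fmem: "(\<lambda>x. s x *\<^sub>R k (f x)) \<in> F" if "smooth_on S s" "smooth_on U k" for s k
    unfolding F_def by (rule CollectI, rule exI[of _ s], rule exI[of _ k]) (simp add: that)
  have "\<exists>h'. (\<forall>x\<in>S. (h has_derivative h' x) (at x within S)) \<and> (\<forall>v. (\<lambda>x. h' x v) \<in> smc S F)"
    if "h \<in> F" for h
  proof -
    from that obtain s k where sk: "smooth_on S s" "smooth_on U k" "h = (\<lambda>x. s x *\<^sub>R k (f x))"
      unfolding F_def by blast
    obtain s' where s': "\<forall>x\<in>S. (s has_derivative s' x) (at x within S)" "\<forall>v. smooth_on S (\<lambda>x. s' x v)"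
      using smooth_onD(2)[OF sk(1)] by blast
    obtain k' where k': "\<forall>x\<in>U. (k has_derivative k' x) (at x within U)" "\<forall>v. smooth_on U (\<lambda>x. k' x v)"
      using smooth_onD(2)[OF sk(2)] by blast
    have dk: "((\<lambda>x. k (f x)) has_derivative (\<lambda>v. k' (f x) (f' x v))) (at x within S)" if "x \<in> S" for x
      by (rule has_derivative_in_compose2[of U k k' f S x]) (use k' fS f' that in auto)
    have lin: "bounded_linear (k' (f x))" if "x \<in> S" for x
      using k' fS that has_derivative_bounded_linear by blast
    have eq: "s x *\<^sub>R k' (f x) (f' x v) = (\<Sum>b\<in>Basis. (s x * inner (f' x v) b) *\<^sub>R k' (f x) b)"
      if "x \<in> S" for x v
    proof -
      have "k' (f x) (f' x v) = k' (f x) (\<Sum>b\<in>Basis. inner (f' x v) b *\<^sub>R b)"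
        by (simp add: euclidean_representation)
      also have "\<dots> = (\<Sum>b\<in>Basis. inner (f' x v) b *\<^sub>R k' (f x) b)"
        using lin[OF that] by (simp add: linear_sum linear_scale bounded_linear.linear)
      finally show ?thesis by (simp add: scaleR_sum_right)
    qed
    show ?thesis
      apply (rule exI[of _ "\<lambda>x v. s x *\<^sub>R k' (f x) (f' x v) + s' x v *\<^sub>R k (f x)"])
    proof (intro conjI ballI allI)
      fix x assume "x \<in> S"
      show "(h has_derivative (\<lambda>v. s x *\<^sub>R k' (f x) (f' x v) + s' x v *\<^sub>R k (f x))) (at x within S)"
        unfolding sk(3) using s' dk \<open>x\<in>S\<close> by (auto intro: has_derivative_scaleR)
    next
      fix v
      show "(\<lambda>x. s x *\<^sub>R k' (f x) (f' x v) + s' x v *\<^sub>R k (f x)) \<in> smc S F"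
      proof (rule smc.add)
        show "(\<lambda>x. s' x v *\<^sub>R k (f x)) \<in> smc S F"
          by (rule smc.base, rule Fmem) (use s' sk in auto)
        show "(\<lambda>x. s x *\<^sub>R k' (f x) (f' x v)) \<in> smc S F"
        proof (rule smc.cong[OF smc_sum])
          show "finite (Basis :: 'c set)" by simp
          fix b :: 'c assume "b \<in> Basis"
          show "(\<lambda>x. (s x * inner (f' x v) b) *\<^sub>R k' (f x) b) \<in> smc S F"
          proof (rule smc.base)
            have "smooth_on S (\<lambda>x. s x * inner (f' x v) b)"
              by (intro smooth_on_mult smooth_on_inner sk(1) f'(2)[rule_format] smooth_on_const)
            moreover have "smooth_on U (\<lambda>x. k' x b)" using k'(2) by blast
            ultimately show "(\<lambda>x. (s x * inner (f' x v) b) *\<^sub>R k' (f x) b) \<in> F"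
              by (rule Fmem)
          qed
        qed (use eq in auto)
      qed
    qed
  qed
  moreover have "(\<lambda>x. k (f x)) \<in> smc S F"
  proof (rule smc.cong[OF smc.base[of "\<lambda>x. (\<lambda>x. 1) x *\<^sub>R k (f x)"]])
    show "(\<lambda>x. (\<lambda>x. 1) x *\<^sub>R k (f x)) \<in> F"
      by (rule Fmem[OF smooth_on_const k])
  qed simp
  ultimately show ?thesis by (rule smc_smooth)
qed




lemma smooth_on_exp_real: "smooth_on (S::real set) exp"
proof -
  define F where "F = range (\<lambda>c::real. \<lambda>x::real. c * exp x)"
  have Fm: "(\<lambda>x. c * exp x) \<in> F" for c unfolding F_def by (rule rangeI)
  have "\<exists>g'. (\<forall>x\<in>S. (g has_derivative g' x) (at x within S)) \<and> (\<forall>v. (\<lambda>x. g' x v) \<in> smc S F)"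
    if "g \<in> F" for g
  proof -
    from that obtain c where c: "g = (\<lambda>x. c * exp x)" unfolding F_def by blast
    show ?thesis
    proof (intro exI[of _ "\<lambda>x v. (c * exp x) * v"] conjI ballI allI)
      fix x assume "x \<in> S"
      have "(g has_real_derivative (c * exp x)) (at x within S)"
        unfolding c by (auto intro!: derivative_eq_intros)
      then show "(g has_derivative (\<lambda>v. (c * exp x) * v)) (at x within S)"
        by (simp add: has_field_derivative_def)
    next
      fix v
      show "(\<lambda>x. (c * exp x) * v) \<in> smc S F"
        by (rule smc.cong[OF smc.base[OF Fm[of "c * v"]]]) simp
    qed
  qed
  moreover have "exp \<in> smc S F"
    by (rule smc.cong[OF smc.base[OF Fm[of 1]]]) simp
  ultimately show ?thesis by (rule smc_smooth)
qed

lemma smooth_on_powr_real: "smooth_on {0<..} (\<lambda>x::real. x powr a)"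
proof -
  define S :: "real set" where "S = {0<..}"
  define F where "F = {h. \<exists>c b. h = (\<lambda>x::real. c * x powr b)}"
  have Fm: "(\<lambda>x. c * x powr b) \<in> F" for c b unfolding F_def by blast
  have "\<exists>g'. (\<forall>x\<in>S. (g has_derivative g' x) (at x within S)) \<and> (\<forall>v. (\<lambda>x. g' x v) \<in> smc S F)"
    if "g \<in> F" for g
  proof -
    from that obtain c b where c: "g = (\<lambda>x. c * x powr b)" unfolding F_def by blast
    show ?thesis
    proof (intro exI[of _ "\<lambda>x v. (c * (b * x powr (b - 1))) * v"] conjI ballI allI)
      fix x assume "x \<in> S"
      then have "x > 0" by (simp add: S_def)
      have "(g has_real_derivative (c * (b * x powr (b - 1)))) (at x)"
        unfolding c by (intro DERIV_cmult has_real_derivative_powr \<open>x > 0\<close>)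
      then show "(g has_derivative (\<lambda>v. (c * (b * x powr (b - 1))) * v)) (at x within S)"
        by (simp add: has_field_derivative_def has_derivative_at_withinI)
    next
      fix v
      show "(\<lambda>x. (c * (b * x powr (b - 1))) * v) \<in> smc S F"
        by (rule smc.cong[OF smc.base[OF Fm[of "c * b * v" "b - 1"]]]) simp
    qed
  qed
  moreover have "(\<lambda>x. x powr a) \<in> smc S F"
    by (rule smc.cong[OF smc.base[OF Fm[of 1 a]]]) simp
  ultimately show ?thesis unfolding S_def by (rule smc_smooth)
qed

lemma smooth_on_inverse_real: "smooth_on {x::real. x \<noteq> 0} inverse"
proof -
  define S :: "real set" where "S = {x. x \<noteq> 0}"
  define F where "F = {h. \<exists>c (k::nat). h = (\<lambda>x::real. c * inverse x ^ k)}"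
  have Fm: "(\<lambda>x. c * inverse x ^ k) \<in> F" for c k unfolding F_def by blast
  have "\<exists>g'. (\<forall>x\<in>S. (g has_derivative g' x) (at x within S)) \<and> (\<forall>v. (\<lambda>x. g' x v) \<in> smc S F)"
    if "g \<in> F" for g
  proof -
    from that obtain c k where c: "g = (\<lambda>x. c * inverse x ^ k)" unfolding F_def by blast
    show ?thesis
    proof (intro exI[of _ "\<lambda>x v. (- c * real k * inverse x ^ (k + 1)) * v"] conjI ballI allI)
      fix x assume "x \<in> S"
      then have x: "x \<noteq> 0" by (simp add: S_def)
      have d: "(g has_real_derivative (c * (real k * inverse x ^ (k - 1) * (- (inverse x * inverse x))))) (at x)"
        unfolding c using x by (auto intro!: derivative_eq_intros)
      have e: "c * (real k * inverse x ^ (k - 1) * (- (inverse x * inverse x))) = - c * real k * inverse x ^ (k + 1)"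
        by (cases k) (simp_all add: algebra_simps)
      from d have "(g has_real_derivative (- c * real k * inverse x ^ (k + 1))) (at x)" by (simp only: e)
      then show "(g has_derivative (\<lambda>v. (- c * real k * inverse x ^ (k + 1)) * v)) (at x within S)"
        unfolding has_field_derivative_def by (rule has_derivative_at_withinI)
    next
      fix v
      show "(\<lambda>x. (- c * real k * inverse x ^ (k + 1)) * v) \<in> smc S F"
        by (rule smc.cong[OF smc.base[OF Fm[of "- c * real k * v" "k + 1"]]]) simp
    qed
  qed
  moreover have "inverse \<in> smc S F"
    by (rule smc.cong[OF smc.base[OF Fm[of 1 1]]]) simp
  ultimately show ?thesis unfolding S_def by (rule smc_smooth)
qed

lemma smooth_on_exp:
  fixes f :: "'a::euclidean_space \<Rightarrow> real"
  assumes "smooth_on S f"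
  shows "smooth_on S (\<lambda>x. exp (f x))"
  by (rule smooth_on_compose[OF smooth_on_exp_real[of UNIV] assms]) simp

lemma smooth_on_powr:
  fixes f :: "'a::euclidean_space \<Rightarrow> real"
  assumes "smooth_on S f" "\<And>x. x \<in> S \<Longrightarrow> f x > 0"
  shows "smooth_on S (\<lambda>x. f x powr a)"
  by (rule smooth_on_compose[OF smooth_on_powr_real assms(1)]) (use assms(2) in auto)

lemma smooth_on_inverse:
  fixes f :: "'a::euclidean_space \<Rightarrow> real"
  assumes "smooth_on S f" "\<And>x. x \<in> S \<Longrightarrow> f x \<noteq> 0"
  shows "smooth_on S (\<lambda>x. inverse (f x))"
  by (rule smooth_on_compose[OF smooth_on_inverse_real assms(1)]) (use assms(2) in auto)

lemma smooth_on_divide: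
  fixes f g :: "'a::euclidean_space \<Rightarrow> real"
  assumes "smooth_on S f" "smooth_on S g" "\<And>x. x \<in> S \<Longrightarrow> g x \<noteq> 0"
  shows "smooth_on S (\<lambda>x. f x / g x)"
  unfolding divide_inverse by (intro smooth_on_mult smooth_on_inverse assms)

lemma smooth_on_vec_nth:
  assumes "smooth_on S f"
  shows "smooth_on S (\<lambda>x. f x $ i)"
  by (rule smooth_on_linear_comp[OF bounded_linear_vec_nth assms])

lemma smooth_on_vec_lambda:
  fixes f :: "'i::finite \<Rightarrow> 'a::euclidean_space \<Rightarrow> real"
  assumes "\<And>i. smooth_on S (f i)"
  shows "smooth_on S (\<lambda>x. \<chi> i. f i x)"
proof (rule smooth_on_cong)
  show "smooth_on S (\<lambda>x. \<Sum>i\<in>UNIV. f i x *\<^sub>R axis i (1::real))"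
    by (intro smooth_on_sum smooth_on_scaleR assms smooth_on_const) simp
  fix x show "(\<chi> i. f i x) = (\<Sum>i\<in>UNIV. f i x *\<^sub>R axis i (1::real))"
    by (simp add: vec_eq_iff axis_def if_distrib sum.delta cong: if_cong)
qed

lemma smooth_on_det:
  fixes A :: "'a::euclidean_space \<Rightarrow> real^'n^'n"
  assumes "\<And>i j. smooth_on S (\<lambda>x. A x $ i $ j)"
  shows "smooth_on S (\<lambda>x. det (A x))"
  unfolding det_def
  by (intro smooth_on_sum smooth_on_mult smooth_on_const smooth_on_prod assms) simp_all


lemma smooth_on_inverse_fun:
  fixes G :: "real^'k \<Rightarrow> real^'k" and D :: "(real^'k) set"
  assumes D: "open D" and G: "smooth_on D G" and injG: "inj_on G D"
    and inj': "\<And>x G'. x \<in> D \<Longrightarrow> (G has_derivative G') (at x) \<Longrightarrow> inj G'"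
  shows "smooth_on (G ` D) (inv_into D G)"
proof -
  define g where "g = inv_into D G"
  define V where "V = G ` D"
  obtain G' where G': "\<forall>x\<in>D. (G has_derivative G' x) (at x within D)" "\<forall>v. smooth_on D (\<lambda>x. G' x v)"
    using smooth_onD(2)[OF G] by blast
  have dG: "(G has_derivative G' x) (at x)" if "x \<in> D" for x
    using G'(1) that at_within_open[OF that D] by metis
  have linG: "linear (G' x)" if "x \<in> D" for x
    using dG[OF that] has_derivative_linear by blast
  have injG': "inj (G' x)" if "x \<in> D" for x
    using inj'[OF that dG[OF that]] .
  define Mx where "Mx x = matrix (G' x)" for x
  have Mx_ent: "Mx x $ i $ j = G' x (axis j 1) $ i" for x i j
    by (simp add: Mx_def matrix_def)
  have det_nz: "det (Mx x) \<noteq> 0" if "x \<in> D" for x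
    using det_nz_iff_inj[OF linG[OF that]] injG'[OF that] by (simp add: Mx_def)
  define Ginv where "Ginv x w = (\<chi> k. det (\<chi> i j. if j = k then w $ i else Mx x $ i $ j) / det (Mx x))" for x w
  have GGinv: "G' x (Ginv x w) = w" if "x \<in> D" for x w
  proof -
    have "Mx x *v (Ginv x w) = w"
      using cramer[OF det_nz[OF that], of "Ginv x w" w] by (simp add: Ginv_def)
    then show ?thesis
      using fun_cong[OF matrix_vector_mul(2)[OF linG[OF that]], of "Ginv x w"] by (simp add: Mx_def)
  qed
  have gG: "g (G x) = x" if "x \<in> D" for x
    unfolding g_def using injG that by (simp add: inv_into_f_f)
  have gV: "g y \<in> D" if "y \<in> V" for y
    using that unfolding V_def g_def by (auto simp: inv_into_into)
  have Gg: "G (g y) = y" if "y \<in> V" for y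
    using that unfolding V_def g_def by (auto simp: f_inv_into_f)
  have contG: "continuous_on D G" using smooth_onD(1)[OF G] .
  have dg: "(g has_derivative Ginv (g y)) (at y)" if "y \<in> V" for y
  proof -
    have "(g has_derivative Ginv (g y)) (at (G (g y)))"
    proof (rule has_derivative_inverse_strong[OF D gV[OF that] contG])
      show "\<And>x. x \<in> D \<Longrightarrow> g (G x) = x" by (rule gG)
      show "(G has_derivative G' (g y)) (at (g y))" by (rule dG[OF gV[OF that]])
      show "G' (g y) \<circ> Ginv (g y) = id"
        using GGinv[OF gV[OF that]] by (auto simp: fun_eq_iff)
    qed
    then show ?thesis using Gg[OF that] by simp
  qed
  have Ginv_smooth: "smooth_on D (\<lambda>x. Ginv x v $ k)" for v k
    unfolding Ginv_def vec_lambda_beta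
  proof (rule smooth_on_divide)
    show "smooth_on D (\<lambda>x. det (Mx x))"
      by (rule smooth_on_det) (unfold Mx_ent, intro smooth_on_vec_nth G'(2)[rule_format])
    show "smooth_on D (\<lambda>x. det (\<chi> i j. if j = k then v $ i else Mx x $ i $ j))"
    proof (rule smooth_on_det)
      fix i j
      show "smooth_on D (\<lambda>x. (\<chi> i j. if j = k then v $ i else Mx x $ i $ j) $ i $ j)"
        by (cases "j = k") (simp_all add: Mx_ent smooth_on_vec_nth G'(2))
    qed
  qed (rule det_nz)
  define F where "F = {f. \<exists>h::real^'k \<Rightarrow> real^'k. smooth_on D h \<and> f = (\<lambda>y. h (g y))}"
  have Fm: "(\<lambda>y. h (g y)) \<in> F" if "smooth_on D h" for h :: "real^'k \<Rightarrow> real^'k"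
    unfolding F_def by (rule CollectI, rule exI[of _ h]) (simp add: that)
  have "\<exists>f'. (\<forall>y\<in>V. (f has_derivative f' y) (at y within V)) \<and> (\<forall>v. (\<lambda>y. f' y v) \<in> smc V F)"
    if "f \<in> F" for f
  proof -
    from that obtain h where h: "smooth_on D h" "f = (\<lambda>y. h (g y))" unfolding F_def by blast
    obtain h' where h': "\<forall>x\<in>D. (h has_derivative h' x) (at x within D)" "\<forall>v. smooth_on D (\<lambda>x. h' x v)"
      using smooth_onD(2)[OF h(1)] by blast
    have lin: "bounded_linear (h' x)" if "x \<in> D" for x
      using h'(1) that has_derivative_bounded_linear by blast
    show ?thesis
    proof (intro exI[of _ "\<lambda>y v. h' (g y) (Ginv (g y) v)"] conjI ballI allI)
      fix y assume "y \<in> V"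
      show "(f has_derivative (\<lambda>v. h' (g y) (Ginv (g y) v))) (at y within V)"
        unfolding h(2)
        by (rule has_derivative_in_compose2[of D h h' g V y])
          (use h'(1) gV \<open>y \<in> V\<close> has_derivative_at_withinI[OF dg[OF \<open>y \<in> V\<close>]] in auto)
    next
      fix v
      have "smooth_on D (\<lambda>x. h' x (Ginv x v))"
      proof (rule smooth_on_cong)
        show "smooth_on D (\<lambda>x. \<Sum>k\<in>UNIV. Ginv x v $ k *\<^sub>R h' x (axis k 1))"
          by (intro smooth_on_sum smooth_on_scaleR Ginv_smooth h'(2)[rule_format]) simp
        fix x assume "x \<in> D"
        have "h' x (Ginv x v) = h' x (\<Sum>k\<in>UNIV. Ginv x v $ k *\<^sub>R axis k 1)"
          using basis_expansion[of "Ginv x v"] by (simp add: scalar_mult_eq_scaleR)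
        also have "\<dots> = (\<Sum>k\<in>UNIV. Ginv x v $ k *\<^sub>R h' x (axis k 1))"
          using lin[OF \<open>x \<in> D\<close>] by (simp add: linear_sum linear_scale bounded_linear.linear)
        finally show "h' x (Ginv x v) = (\<Sum>k\<in>UNIV. Ginv x v $ k *\<^sub>R h' x (axis k 1))" .
      qed
      then show "(\<lambda>y. h' (g y) (Ginv (g y) v)) \<in> smc V F"
        by (rule smc.base[OF Fm])
    qed
  qed
  moreover have "g \<in> smc V F"
    by (rule smc.cong[OF smc.base[OF Fm[OF smooth_on_id]]]) simp
  ultimately have "smooth_on V g" by (rule smc_smooth)
  then show ?thesis by (simp add: V_def g_def)
qed




definition rsum :: "real^'m^'n \<Rightarrow> 'n \<Rightarrow> real" where "rsum B i = (\<Sum>j\<in>UNIV. B $ i $ j)"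
definition csum :: "real^'m^'n \<Rightarrow> 'm \<Rightarrow> real" where "csum B j = (\<Sum>i\<in>UNIV. B $ i $ j)"
definition posm :: "real^'m^'n \<Rightarrow> bool" where "posm B \<longleftrightarrow> (\<forall>i j. B $ i $ j > 0)"
definition scal :: "real^'m^'n \<Rightarrow> real^'m^'n \<Rightarrow> bool" where
  "scal A B \<longleftrightarrow> (\<exists>x y. (\<forall>i. x i > 0) \<and> (\<forall>j. y j > 0) \<and> (\<forall>i j. B $ i $ j = x i * A $ i $ j * y j))"

lemma sum_pos_finite_univ:
  fixes f :: "'i::finite \<Rightarrow> real"
  assumes "\<And>i. f i > 0"
  shows "(\<Sum>i\<in>UNIV. f i) > 0"
  by (rule sum_pos) (use assms in auto)

lemma rsum_pos: "posm B \<Longrightarrow> rsum B i > 0"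
  unfolding rsum_def posm_def by (rule sum_pos_finite_univ) auto

lemma csum_pos: "posm B \<Longrightarrow> csum B j > 0"
  unfolding csum_def posm_def by (rule sum_pos_finite_univ) auto

lemma row_scale_nth: "row_scale r B $ i $ j = r $ i * B $ i $ j / rsum B i"
  by (simp add: row_scale_def rsum_def)

lemma col_scale_nth: "col_scale c B $ i $ j = c $ j * B $ i $ j / csum B j"
  by (simp add: col_scale_def csum_def)

lemma posm_row_scale: assumes "posm B" "\<forall>i. r $ i > 0" shows "posm (row_scale r B)"
  using assms rsum_pos[OF assms(1)] unfolding posm_def by (auto simp: row_scale_nth intro!: divide_pos_pos mult_pos_pos)

lemma posm_col_scale: assumes "posm B" "\<forall>j. c $ j > 0" shows "posm (col_scale c B)"
  using assms csum_pos[OF assms(1)] unfolding posm_def by (auto simp: col_scale_nth intro!: divide_pos_pos mult_pos_pos)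

lemma rsum_row_scale: "posm B \<Longrightarrow> rsum (row_scale r B) i = r $ i"
proof -
  assume "posm B"
  then have "rsum B i > 0" by (rule rsum_pos)
  then show ?thesis
    by (simp add: rsum_def[of "row_scale r B"] row_scale_nth sum_divide_distrib[symmetric]
        sum_distrib_left[symmetric] rsum_def[symmetric])
qed

lemma csum_col_scale: "posm B \<Longrightarrow> csum (col_scale c B) j = c $ j"
proof -
  assume "posm B"
  then have "csum B j > 0" by (rule csum_pos)
  then show ?thesis
    by (simp add: csum_def[of "col_scale c B"] col_scale_nth sum_divide_distrib[symmetric]
        sum_distrib_left[symmetric] csum_def[symmetric])
qed

lemma total_sum: "(\<Sum>i\<in>UNIV. rsum B i) = (\<Sum>j\<in>UNIV. csum B j)"
  unfolding rsum_def csum_def by (rule sum.swap)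

lemma scal_row_scale:
  assumes "scal A B" "posm B" "\<forall>i. r $ i > 0"
  shows "scal A (row_scale r B)"
proof -
  obtain x y where xy: "\<forall>i. x i > 0" "\<forall>j. y j > 0" "\<forall>i j. B $ i $ j = x i * A $ i $ j * y j"
    using assms(1) unfolding scal_def by blast
  show ?thesis unfolding scal_def
  proof (intro exI[of _ "\<lambda>i. r $ i * x i / rsum B i"] exI[of _ y] conjI allI)
    fix i show "0 < r $ i * x i / rsum B i" using xy assms(3) rsum_pos[OF assms(2)] by simp
  next
    fix i j show "row_scale r B $ i $ j = r $ i * x i / rsum B i * A $ i $ j * y j"
      by (simp add: row_scale_nth xy)
  qed (use xy in auto)
qed

lemma scal_col_scale:
  assumes "scal A B" "posm B" "\<forall>j. c $ j > 0"
  shows "scal A (col_scale c B)"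
proof -
  obtain x y where xy: "\<forall>i. x i > 0" "\<forall>j. y j > 0" "\<forall>i j. B $ i $ j = x i * A $ i $ j * y j"
    using assms(1) unfolding scal_def by blast
  show ?thesis unfolding scal_def
  proof (intro exI[of _ x] exI[of _ "\<lambda>j. c $ j * y j / csum B j"] conjI allI)
    fix j show "0 < c $ j * y j / csum B j" using xy assms(3) csum_pos[OF assms(2)] by simp
  next
    fix i j show "col_scale c B $ i $ j = x i * A $ i $ j * (c $ j * y j / csum B j)"
      by (simp add: col_scale_nth xy)
  qed (use xy in auto)
qed

lemma scal_refl: "scal A A"
  unfolding scal_def by (intro exI[of _ "\<lambda>i. 1"] exI[of _ "\<lambda>j. 1"]) simp

lemma scal_cross:
  assumes "scal A B"
  shows "B $ p $ j * B $ i $ l * (A $ i $ j * A $ p $ l) = B $ i $ j * B $ p $ l * (A $ p $ j * A $ i $ l)"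
proof -
  obtain x y where xy: "\<forall>i j. B $ i $ j = x i * A $ i $ j * y j"
    using assms(1) unfolding scal_def by blast
  show ?thesis by (simp add: xy algebra_simps)
qed

lemma cross_scal:
  fixes A B :: "real^'m^'n"
  assumes pA: "posm A" and pB: "posm B"
    and cr: "\<And>p j i l. B $ p $ j * B $ i $ l * (A $ i $ j * A $ p $ l) = B $ i $ j * B $ p $ l * (A $ p $ j * A $ i $ l)"
  shows "scal A B"
proof -
  obtain i0 :: 'n where True by blast
  obtain j0 :: 'm where True by blast
  define x where "x i = B $ i $ j0 / A $ i $ j0" for i
  define y where "y j = B $ i0 $ j * A $ i0 $ j0 / (A $ i0 $ j * B $ i0 $ j0)" for j
  have Ap: "A $ i $ j > 0" for i j using pA by (simp add: posm_def)
  have Bp: "B $ i $ j > 0" for i j using pB by (simp add: posm_def)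
  show ?thesis unfolding scal_def
  proof (intro exI[of _ x] exI[of _ y] conjI allI)
    fix i show "x i > 0" using Ap Bp by (simp add: x_def)
  next
    fix j show "y j > 0" using Ap Bp by (simp add: y_def)
  next
    fix i j
    have e: "B $ i0 $ j * B $ i $ j0 * (A $ i $ j * A $ i0 $ j0) = B $ i $ j * B $ i0 $ j0 * (A $ i0 $ j * A $ i $ j0)"
      by (rule cr)
    have "x i * A $ i $ j * y j = (B $ i0 $ j * B $ i $ j0 * (A $ i $ j * A $ i0 $ j0)) / (B $ i0 $ j0 * (A $ i0 $ j * A $ i $ j0))"
      using Ap Bp by (simp add: x_def y_def field_simps)
    also have "\<dots> = B $ i $ j"
    proof -
      have nz: "B $ i0 $ j0 * (A $ i0 $ j * A $ i $ j0) \<noteq> 0"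
        using Ap[of i0 j] Ap[of i j0] Bp[of i0 j0] by simp
      show ?thesis unfolding e using nz by simp
    qed
    finally show "B $ i $ j = x i * A $ i $ j * y j" by simp
  qed
qed

lemma gibbs:
  fixes p q :: "'i::finite \<Rightarrow> real"
  assumes p: "\<And>i. p i > 0" and q: "\<And>i. q i > 0" and s: "(\<Sum>i\<in>UNIV. p i) = (\<Sum>i\<in>UNIV. q i)"
  shows "(\<Sum>i\<in>UNIV. p i * ln (p i / q i)) \<ge> 0"
    and "(\<Sum>i\<in>UNIV. p i * ln (p i / q i)) = 0 \<Longrightarrow> p = q"
proof -
  define t where "t i = p i * ln (p i / q i) - (p i - q i)" for i
  have t0: "t i \<ge> 0" for i
  proof -
    have "ln (q i / p i) \<le> q i / p i - 1" using p q by (intro ln_le_minus_one) (simp add: p q)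
    then have "p i * ln (q i / p i) \<le> p i * (q i / p i - 1)" using p[of i] by (simp add: mult_left_mono)
    moreover have "ln (p i / q i) = - ln (q i / p i)" using p[of i] q[of i] by (simp add: ln_div)
    moreover have "p i * (q i / p i - 1) = q i - p i" using p[of i] by (simp add: field_simps)
    ultimately show ?thesis by (simp add: t_def)
  qed
  have st: "(\<Sum>i\<in>UNIV. t i) = (\<Sum>i\<in>UNIV. p i * ln (p i / q i))"
    unfolding t_def sum_subtractf using s by simp
  show "(\<Sum>i\<in>UNIV. p i * ln (p i / q i)) \<ge> 0"
    unfolding st[symmetric] by (rule sum_nonneg) (use t0 in auto)
  assume "(\<Sum>i\<in>UNIV. p i * ln (p i / q i)) = 0"
  then have "\<forall>i\<in>UNIV. t i = 0" using st sum_nonneg_eq_0_iff[of UNIV t] t0 by auto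
  show "p = q"
  proof
    fix i
    have "t i = 0" using \<open>\<forall>i\<in>UNIV. t i = 0\<close> by simp
    have "ln (p i / q i) = - ln (q i / p i)" using p[of i] q[of i] by (simp add: ln_div)
    moreover have "p i * (q i / p i - 1) = q i - p i" using p[of i] by (simp add: field_simps)
    ultimately have "p i * ln (q i / p i) = p i * (q i / p i - 1)"
      using \<open>t i = 0\<close> by (simp add: t_def)
    then have "ln (q i / p i) = q i / p i - 1" using p[of i] by simp
    then have "q i / p i = 1" using p[of i] q[of i] by (intro ln_eq_minus_one) simp_all
    then show "p i = q i" using p[of i] by simp
  qed
qed


definition KL :: "real^'i \<Rightarrow> ('i \<Rightarrow> real) \<Rightarrow> real" where
  "KL p q = (\<Sum>i\<in>UNIV. p $ i * ln (p $ i / q i))"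

definition Psi :: "real^'m^'n \<Rightarrow> real^'n \<Rightarrow> real^'m \<Rightarrow> real^'m^'n \<Rightarrow> real" where
  "Psi A r c B = (\<Sum>i\<in>UNIV. \<Sum>j\<in>UNIV. r $ i * c $ j * ln (B $ i $ j / A $ i $ j))"

locale sk =
  fixes A :: "real^'m^'n" and r :: "real^'n" and c :: "real^'m"
  assumes pA: "posm A" and pr: "\<And>i. r $ i > 0" and pc: "\<And>j. c $ j > 0"
    and sr: "(\<Sum>i\<in>UNIV. r $ i) = 1" and sc: "(\<Sum>j\<in>UNIV. c $ j) = 1"
begin

abbreviation "X \<equiv> sinkhorn_iter r c A"

lemma Ap: "A $ i $ j > 0" using pA by (simp add: posm_def)
lemma pr': "\<forall>i. r $ i > 0" using pr by blast
lemma pc': "\<forall>j. c $ j > 0" using pc by blast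

lemma X_props: "posm (X k) \<and> scal A (X k)"
proof (induction k)
  case 0
  then show ?case using pA scal_refl by simp
next
  case (Suc k)
  then have p: "posm (X k)" "scal A (X k)" by simp_all
  have a: "posm (row_scale r (X k))" by (rule posm_row_scale[OF p(1) pr'])
  have b: "scal A (row_scale r (X k))" by (rule scal_row_scale[OF p(2) p(1) pr'])
  show ?case using posm_col_scale[OF a pc'] scal_col_scale[OF b a pc'] by simp
qed

lemma X_Suc: "X (Suc k) = col_scale c (row_scale r (X k))" by simp

lemma csum_X_Suc: "csum (X (Suc k)) j = c $ j"
  unfolding X_Suc using X_props[of k] by (intro csum_col_scale posm_row_scale pr') simp_all

definition theta where
  "theta = Max (range (\<lambda>(p,j,i,l). A $ p $ j * A $ i $ l / (A $ i $ j * A $ p $ l)))"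

lemma theta_ge: "A $ p $ j * A $ i $ l / (A $ i $ j * A $ p $ l) \<le> theta"
  unfolding theta_def by (rule Max_ge) (auto intro: range_eqI[of _ _ "(p,j,i,l)"])

lemma theta_pos: "theta > 0"
proof -
  obtain p :: 'n where True by blast
  obtain j :: 'm where True by blast
  have "A $ p $ j * A $ p $ j / (A $ p $ j * A $ p $ j) \<le> theta" by (rule theta_ge)
  then show ?thesis using Ap[of p j] by simp
qed

lemma lower_bound:
  assumes pB: "posm B" and sB: "scal A B" and rB: "\<And>i. rsum B i = r $ i"
  shows "c $ j * r $ i / theta \<le> col_scale c B $ i $ j"
proof -
  have Bp: "B $ i $ j > 0" for i j using pB by (simp add: posm_def)
  have key: "B $ p $ j * r $ i \<le> theta * B $ i $ j * r $ p" for p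
  proof -
    have l: "B $ p $ j * B $ i $ l \<le> theta * B $ i $ j * B $ p $ l" for l
    proof -
      have cr: "B $ p $ j * B $ i $ l * (A $ i $ j * A $ p $ l) = B $ i $ j * B $ p $ l * (A $ p $ j * A $ i $ l)"
        by (rule scal_cross[OF sB])
      have pos: "A $ i $ j * A $ p $ l > 0" using Ap by simp
      have "B $ p $ j * B $ i $ l = (B $ p $ j * B $ i $ l * (A $ i $ j * A $ p $ l)) / (A $ i $ j * A $ p $ l)"
        using pos by (simp only: nonzero_mult_div_cancel_right less_irrefl not_False_eq_True)
      also have "\<dots> = B $ i $ j * B $ p $ l * (A $ p $ j * A $ i $ l) / (A $ i $ j * A $ p $ l)"
        by (simp only: cr)
      also have "\<dots> = B $ i $ j * B $ p $ l * (A $ p $ j * A $ i $ l / (A $ i $ j * A $ p $ l))"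
        by simp
      also have "\<dots> \<le> B $ i $ j * B $ p $ l * theta"
        using theta_ge[of p j i l] Bp[of i j] Bp[of p l] by (intro mult_left_mono) simp_all
      finally show ?thesis by (simp add: algebra_simps)
    qed
    have "B $ p $ j * r $ i = (\<Sum>l\<in>UNIV. B $ p $ j * B $ i $ l)"
      using rB[of i] unfolding rsum_def by (simp add: sum_distrib_left[symmetric])
    also have "\<dots> \<le> (\<Sum>l\<in>UNIV. theta * B $ i $ j * B $ p $ l)"
      by (rule sum_mono) (rule l)
    also have "\<dots> = theta * B $ i $ j * r $ p"
      using rB[of p] unfolding rsum_def by (simp add: sum_distrib_left[symmetric])
    finally show ?thesis .
  qed
  have "csum B j * r $ i = (\<Sum>p\<in>UNIV. B $ p $ j * r $ i)"
    by (simp add: csum_def sum_distrib_right)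
  also have "\<dots> \<le> (\<Sum>p\<in>UNIV. theta * B $ i $ j * r $ p)"
    by (rule sum_mono) (rule key)
  also have "\<dots> = theta * B $ i $ j" using sr by (simp add: sum_distrib_left[symmetric])
  finally have cs: "csum B j * r $ i \<le> theta * B $ i $ j" .
  have csp: "csum B j > 0" by (rule csum_pos[OF pB])
  have "c $ j * r $ i / theta = c $ j * B $ i $ j * (csum B j * r $ i) / (theta * B $ i $ j * csum B j)"
    using Bp[of i j] theta_pos csp by (simp add: field_simps)
  also have "\<dots> \<le> c $ j * B $ i $ j * (theta * B $ i $ j) / (theta * B $ i $ j * csum B j)"
    using cs pc[of j] Bp[of i j] theta_pos csp
    by (intro divide_right_mono mult_left_mono) simp_all
  also have "\<dots> = col_scale c B $ i $ j"
    using Bp[of i j] theta_pos csp by (simp add: col_scale_nth field_simps)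
  finally show ?thesis .
qed

lemma c_le_1: "c $ j \<le> 1"
proof -
  have "c $ j \<le> (\<Sum>j\<in>UNIV. c $ j)" by (rule member_le_sum) (use pc in \<open>auto intro: less_imp_le\<close>)
  then show ?thesis using sc by simp
qed

lemma entry_le_csum:
  assumes "posm B" shows "B $ i $ j \<le> csum B j"
  unfolding csum_def by (rule member_le_sum) (use assms in \<open>auto simp: posm_def intro: less_imp_le\<close>)

abbreviation "Y k \<equiv> X (Suc k)"

lemma Y_bounds: "c $ j * r $ i / theta \<le> Y k $ i $ j" "Y k $ i $ j \<le> 1"
proof -
  have p: "posm (X k)" "scal A (X k)" using X_props[of k] by simp_all
  have a: "posm (row_scale r (X k))" by (rule posm_row_scale[OF p(1) pr'])
  have b: "scal A (row_scale r (X k))" by (rule scal_row_scale[OF p(2) p(1) pr'])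
  have d: "\<And>i. rsum (row_scale r (X k)) i = r $ i" by (rule rsum_row_scale[OF p(1)])
  show "c $ j * r $ i / theta \<le> Y k $ i $ j" unfolding X_Suc by (rule lower_bound[OF a b d])
  have "Y k $ i $ j \<le> csum (Y k) j" using X_props[of "Suc k"] by (intro entry_le_csum) simp
  then show "Y k $ i $ j \<le> 1" using csum_X_Suc[of k j] c_le_1[of j] by linarith
qed

lemma Psi_row:
  assumes pB: "posm B"
  shows "Psi A r c (row_scale r B) = Psi A r c B + KL r (rsum B)"
proof -
  have Bp: "B $ i $ j > 0" for i j using pB by (simp add: posm_def)
  have rp: "rsum B i > 0" for i by (rule rsum_pos[OF pB])
  have l: "ln (row_scale r B $ i $ j / A $ i $ j) = ln (r $ i / rsum B i) + ln (B $ i $ j / A $ i $ j)" for i j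
  proof -
    have e: "row_scale r B $ i $ j / A $ i $ j = (r $ i / rsum B i) * (B $ i $ j / A $ i $ j)"
      by (simp add: row_scale_nth)
    have "ln ((r $ i / rsum B i) * (B $ i $ j / A $ i $ j)) = ln (r $ i / rsum B i) + ln (B $ i $ j / A $ i $ j)"
      using pr[of i] rp[of i] Bp[of i j] Ap[of i j] by (intro ln_mult_pos) simp_all
    then show ?thesis unfolding e .
  qed
  have "Psi A r c (row_scale r B) = (\<Sum>i\<in>UNIV. \<Sum>j\<in>UNIV. r $ i * c $ j * ln (r $ i / rsum B i) + r $ i * c $ j * ln (B $ i $ j / A $ i $ j))"
    unfolding Psi_def l by (simp add: distrib_left)
  also have "\<dots> = (\<Sum>i\<in>UNIV. \<Sum>j\<in>UNIV. r $ i * c $ j * ln (r $ i / rsum B i)) + Psi A r c B"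
    unfolding Psi_def by (simp add: sum.distrib)
  also have "(\<Sum>i\<in>UNIV. \<Sum>j\<in>UNIV. r $ i * c $ j * ln (r $ i / rsum B i)) = (\<Sum>i\<in>UNIV. r $ i * ln (r $ i / rsum B i) * (\<Sum>j\<in>UNIV. c $ j))"
    by (rule sum.cong[OF refl]) (simp add: sum_distrib_right[symmetric] mult_ac)
  also have "\<dots> = KL r (rsum B)" using sc by (simp add: KL_def)
  finally show ?thesis by simp
qed

lemma Psi_col:
  assumes pB: "posm B"
  shows "Psi A r c (col_scale c B) = Psi A r c B + KL c (csum B)"
proof -
  have Bp: "B $ i $ j > 0" for i j using pB by (simp add: posm_def)
  have cp: "csum B j > 0" for j by (rule csum_pos[OF pB])
  have l: "ln (col_scale c B $ i $ j / A $ i $ j) = ln (c $ j / csum B j) + ln (B $ i $ j / A $ i $ j)" for i j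
  proof -
    have e: "col_scale c B $ i $ j / A $ i $ j = (c $ j / csum B j) * (B $ i $ j / A $ i $ j)"
      by (simp add: col_scale_nth)
    have "ln ((c $ j / csum B j) * (B $ i $ j / A $ i $ j)) = ln (c $ j / csum B j) + ln (B $ i $ j / A $ i $ j)"
      using pc[of j] cp[of j] Bp[of i j] Ap[of i j] by (intro ln_mult_pos) simp_all
    then show ?thesis unfolding e .
  qed
  have "Psi A r c (col_scale c B) = (\<Sum>i\<in>UNIV. \<Sum>j\<in>UNIV. r $ i * c $ j * ln (c $ j / csum B j) + r $ i * c $ j * ln (B $ i $ j / A $ i $ j))"
    unfolding Psi_def l by (simp add: distrib_left)
  also have "\<dots> = (\<Sum>i\<in>UNIV. \<Sum>j\<in>UNIV. r $ i * c $ j * ln (c $ j / csum B j)) + Psi A r c B"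
    unfolding Psi_def by (simp add: sum.distrib)
  also have "(\<Sum>i\<in>UNIV. \<Sum>j\<in>UNIV. r $ i * c $ j * ln (c $ j / csum B j)) = (\<Sum>i\<in>UNIV. r $ i) * (\<Sum>j\<in>UNIV. c $ j * ln (c $ j / csum B j))"
    by (simp add: sum_product mult.assoc)
  also have "\<dots> = KL c (csum B)" using sr by (simp add: KL_def)
  finally show ?thesis by simp
qed

lemma KL_nonneg:
  fixes p :: "real^'i" and q :: "'i \<Rightarrow> real"
  assumes "\<And>i. p $ i > 0" "\<And>i. q i > 0" "(\<Sum>i\<in>UNIV. p $ i) = (\<Sum>i\<in>UNIV. q i)"
  shows "KL p q \<ge> 0"
  unfolding KL_def using gibbs(1)[of "\<lambda>i. p $ i" q] assms by simp

lemma KL_zero: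
  fixes p :: "real^'i" and q :: "'i \<Rightarrow> real"
  assumes "\<And>i. p $ i > 0" "\<And>i. q i > 0" "(\<Sum>i\<in>UNIV. p $ i) = (\<Sum>i\<in>UNIV. q i)" "KL p q = 0"
  shows "q i = p $ i"
  using gibbs(2)[of "\<lambda>i. p $ i" q] assms unfolding KL_def by (metis)

definition psi where "psi k = Psi A r c (Y k)"

lemma Y_pos: "posm (Y k)" using X_props by blast
lemma Y_scal: "scal A (Y k)" using X_props by blast

lemma sum_rsum_Y: "(\<Sum>i\<in>UNIV. rsum (Y k) i) = 1"
  unfolding total_sum csum_X_Suc using sc by simp

lemma psi_step: "psi (Suc k) = psi k + KL r (rsum (Y k)) + KL c (csum (row_scale r (Y k)))"
proof -
  have "Y (Suc k) = col_scale c (row_scale r (Y k))" by simp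
  then show ?thesis
    unfolding psi_def using Psi_col[OF posm_row_scale[OF Y_pos pr']] Psi_row[OF Y_pos] by simp
qed

lemma KLr_nonneg: "KL r (rsum (Y k)) \<ge> 0"
  by (rule KL_nonneg) (use pr rsum_pos[OF Y_pos] sum_rsum_Y sr in auto)

lemma KLc_nonneg: "KL c (csum (row_scale r (Y k))) \<ge> 0"
proof (rule KL_nonneg)
  show "0 < csum (row_scale r (Y k)) j" for j by (rule csum_pos[OF posm_row_scale[OF Y_pos pr']])
  have "(\<Sum>j\<in>UNIV. csum (row_scale r (Y k)) j) = (\<Sum>i\<in>UNIV. rsum (row_scale r (Y k)) i)"
    by (simp add: total_sum)
  also have "\<dots> = 1" using rsum_row_scale[OF Y_pos] sr by simp
  finally show "(\<Sum>j\<in>UNIV. c $ j) = (\<Sum>j\<in>UNIV. csum (row_scale r (Y k)) j)" using sc by simp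
qed (use pc in auto)

lemma psi_inc: "incseq psi"
  unfolding incseq_Suc_iff using psi_step KLr_nonneg KLc_nonneg by (simp add: add_nonneg_nonneg)

definition Psimax where "Psimax = (\<Sum>i\<in>UNIV. \<Sum>j\<in>UNIV. r $ i * c $ j * ln (1 / A $ i $ j))"

lemma psi_le: "psi k \<le> Psimax"
  unfolding psi_def Psi_def Psimax_def
proof (intro sum_mono)
  fix i j
  have "Y k $ i $ j > 0" using Y_pos by (simp add: posm_def)
  then have "ln (Y k $ i $ j / A $ i $ j) \<le> ln (1 / A $ i $ j)"
    using Y_bounds(2)[of k i j] Ap[of i j] by (simp add: divide_right_mono)
  then show "r $ i * c $ j * ln (Y k $ i $ j / A $ i $ j) \<le> r $ i * c $ j * ln (1 / A $ i $ j)"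
    using pr[of i] pc[of j] by (intro mult_left_mono) simp_all
qed

lemma KLr_tendsto: "(\<lambda>k. KL r (rsum (Y k))) \<longlonglongrightarrow> 0"
proof -
  obtain L where L: "psi \<longlonglongrightarrow> L" using incseq_convergent[OF psi_inc, of Psimax] psi_le by blast
  then have "(\<lambda>k. psi (Suc k) - psi k) \<longlonglongrightarrow> L - L"
    by (intro tendsto_diff LIMSEQ_Suc)
  then have d: "(\<lambda>k. psi (Suc k) - psi k) \<longlonglongrightarrow> 0" by simp
  show ?thesis
  proof (rule real_tendsto_sandwich[OF _ _ tendsto_const d])
    show "\<forall>\<^sub>F k in sequentially. 0 \<le> KL r (rsum (Y k))" using KLr_nonneg by simp
    show "\<forall>\<^sub>F k in sequentially. KL r (rsum (Y k)) \<le> psi (Suc k) - psi k"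
      using psi_step KLc_nonneg by simp
  qed
qed

lemma norm_vec_le_sum: "norm (x::'a::real_normed_vector^'k) \<le> (\<Sum>i\<in>UNIV. norm (x $ i))"
  by (simp add: norm_vec_def L2_set_le_sum)

lemma Y_bounded: "bounded (range Y)"
proof -
  have "norm (Y k) \<le> real CARD('n) * real CARD('m)" for k
  proof -
    have "norm (Y k) \<le> (\<Sum>i\<in>UNIV. norm (Y k $ i))" by (rule norm_vec_le_sum)
    also have "\<dots> \<le> (\<Sum>i\<in>UNIV. \<Sum>j\<in>UNIV. norm (Y k $ i $ j))" by (intro sum_mono norm_vec_le_sum)
    also have "\<dots> \<le> (\<Sum>i\<in>(UNIV::'n set). \<Sum>j\<in>(UNIV::'m set). 1)"
    proof (intro sum_mono)
      fix i j
      have "Y k $ i $ j > 0" using Y_pos by (simp add: posm_def)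
      then show "norm (Y k $ i $ j) \<le> 1" using Y_bounds(2)[of k i j] by simp
    qed
    also have "\<dots> = real CARD('n) * real CARD('m)" by simp
    finally show ?thesis .
  qed
  then show ?thesis unfolding bounded_iff by (intro exI[of _ "real CARD('n) * real CARD('m)"]) auto
qed

lemma limpt:
  assumes sm: "strict_mono \<sigma>" and lim: "(\<lambda>k. Y (\<sigma> k)) \<longlonglongrightarrow> Q"
  shows "posm Q" "\<And>j. csum Q j = c $ j" "\<And>i. rsum Q i = r $ i" "scal A Q"
proof -
  have ent: "(\<lambda>k. Y (\<sigma> k) $ i $ j) \<longlonglongrightarrow> Q $ i $ j" for i j
    by (intro tendsto_vec_nth lim)
  have Qlow: "c $ j * r $ i / theta \<le> Q $ i $ j" for i j
    by (rule LIMSEQ_le_const[OF ent]) (use Y_bounds(1) in auto)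
  show pQ: "posm Q" unfolding posm_def
  proof (intro allI)
    fix i j
    have "c $ j * r $ i / theta > 0" using pc[of j] pr[of i] theta_pos by simp
    then show "Q $ i $ j > 0" using Qlow[of j i] by linarith
  qed
  show cQ: "csum Q j = c $ j" for j
  proof -
    have "(\<lambda>k. csum (Y (\<sigma> k)) j) \<longlonglongrightarrow> csum Q j"
      unfolding csum_def by (intro tendsto_sum ent)
    moreover have "(\<lambda>k. csum (Y (\<sigma> k)) j) = (\<lambda>k. c $ j)" using csum_X_Suc by simp
    ultimately have "(\<lambda>k. c $ j) \<longlonglongrightarrow> csum Q j" by simp
    from LIMSEQ_unique[OF tendsto_const this] show ?thesis by simp
  qed
  show "scal A Q"
  proof (rule cross_scal[OF pA pQ])
    fix p j i l
    let ?f = "\<lambda>B::real^'m^'n. B $ p $ j * B $ i $ l * (A $ i $ j * A $ p $ l) - B $ i $ j * B $ p $ l * (A $ p $ j * A $ i $ l)"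
    have "(\<lambda>k. ?f (Y (\<sigma> k))) \<longlonglongrightarrow> ?f Q" by (intro tendsto_diff tendsto_mult tendsto_const ent)
    moreover have "(\<lambda>k. ?f (Y (\<sigma> k))) = (\<lambda>k. 0)" using scal_cross[OF Y_scal] by simp
    ultimately have "(\<lambda>k. 0) \<longlonglongrightarrow> ?f Q" by simp
    from LIMSEQ_unique[OF tendsto_const this] have "?f Q = 0" by simp
    then show "Q $ p $ j * Q $ i $ l * (A $ i $ j * A $ p $ l) = Q $ i $ j * Q $ p $ l * (A $ p $ j * A $ i $ l)"
      by simp
  qed
  show "rsum Q i = r $ i" for i
  proof -
    have rQ: "rsum Q i > 0" for i by (rule rsum_pos[OF pQ])
    have "(\<lambda>k. KL r (rsum (Y (\<sigma> k)))) \<longlonglongrightarrow> KL r (rsum Q)"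
    proof -
      have nz1: "(\<Sum>j\<in>UNIV. Q $ i $ j) \<noteq> 0" for i using rQ[of i] by (simp add: rsum_def)
      have nz2: "r $ i \<noteq> 0" for i using pr[of i] by simp
      have nz3: "r $ i / (\<Sum>j\<in>UNIV. Q $ i $ j) \<noteq> 0" for i using rQ[of i] pr[of i] by (simp add: rsum_def)
      show ?thesis
        unfolding KL_def rsum_def
        by (intro tendsto_sum tendsto_mult tendsto_const tendsto_ln tendsto_divide ent nz1 nz3)
    qed
    moreover have "(\<lambda>k. KL r (rsum (Y (\<sigma> k)))) \<longlonglongrightarrow> 0"
      using LIMSEQ_subseq_LIMSEQ[OF KLr_tendsto sm] by (simp add: o_def)
    ultimately have "KL r (rsum Q) = 0" by (rule LIMSEQ_unique)
    moreover have "(\<Sum>i\<in>UNIV. r $ i) = (\<Sum>i\<in>UNIV. rsum Q i)"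
      using sr cQ sc by (simp add: total_sum)
    ultimately show ?thesis using KL_zero[of r "rsum Q" i] pr rQ by simp
  qed
qed

end

lemma scal_unique:
  fixes A Q1 Q2 :: "real^'m^'n"
  assumes pA: "posm A" and s1: "scal A Q1" and s2: "scal A Q2"
    and rr: "\<And>i. rsum Q1 i = rsum Q2 i" and cc: "\<And>j. csum Q1 j = csum Q2 j"
  shows "Q1 = Q2"
proof -
  obtain x1 y1 where xy1: "\<forall>i. x1 i > 0" "\<forall>j. y1 j > 0" "\<forall>i j. Q1 $ i $ j = x1 i * A $ i $ j * y1 j"
    using s1 unfolding scal_def by blast
  obtain x2 y2 where xy2: "\<forall>i. x2 i > 0" "\<forall>j. y2 j > 0" "\<forall>i j. Q2 $ i $ j = x2 i * A $ i $ j * y2 j"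
    using s2 unfolding scal_def by blast
  have Ap: "A $ i $ j > 0" for i j using pA by (simp add: posm_def)
  define al where "al i = ln (x1 i / x2 i)" for i
  define be where "be j = ln (y1 j / y2 j)" for j
  define t where "t i j = al i + be j" for i j
  have Q2p: "Q2 $ i $ j > 0" for i j using xy2 Ap by simp
  have Q1e: "Q1 $ i $ j = exp (t i j) * Q2 $ i $ j" for i j
  proof -
    have "exp (t i j) = (x1 i / x2 i) * (y1 j / y2 j)"
      using xy1 xy2 by (simp add: t_def al_def be_def exp_add)
    moreover have "x2 i > 0" "y2 j > 0" using xy2 by auto
    ultimately show ?thesis using xy1(3) xy2(3) by (simp add: field_simps)
  qed
  define D where "D i j = Q1 $ i $ j - Q2 $ i $ j" for i j
  have "(\<Sum>i\<in>UNIV. \<Sum>j\<in>UNIV. D i j * t i j) = (\<Sum>i\<in>UNIV. \<Sum>j\<in>UNIV. D i j * al i) + (\<Sum>i\<in>UNIV. \<Sum>j\<in>UNIV. D i j * be j)"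
    by (simp add: t_def distrib_left sum.distrib)
  also have "(\<Sum>i\<in>UNIV. \<Sum>j\<in>UNIV. D i j * al i) = (\<Sum>i\<in>UNIV. al i * (rsum Q1 i - rsum Q2 i))"
    by (simp add: D_def rsum_def sum_distrib_left sum_subtractf algebra_simps)
  also have "\<dots> = 0" using rr by simp
  also have "(\<Sum>i\<in>UNIV. \<Sum>j\<in>UNIV. D i j * be j) = (\<Sum>j\<in>UNIV. be j * (csum Q1 j - csum Q2 j))"
    by (subst sum.swap) (simp add: D_def csum_def sum_distrib_left sum_subtractf algebra_simps)
  also have "\<dots> = 0" using cc by simp
  finally have s0: "(\<Sum>i\<in>UNIV. \<Sum>j\<in>UNIV. D i j * t i j) = 0" by simp
  have tn: "D i j * t i j \<ge> 0" for i j
  proof -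
    have "D i j * t i j = Q2 $ i $ j * ((exp (t i j) - 1) * t i j)"
      by (simp add: D_def Q1e algebra_simps)
    moreover have "(exp (t i j) - 1) * t i j \<ge> 0"
    proof (cases "t i j \<ge> 0")
      case True then show ?thesis by (simp add: mult_nonneg_nonneg)
    next
      case False then have "exp (t i j) < 1" by simp
      then show ?thesis using False by (simp add: mult_nonpos_nonpos)
    qed
    ultimately show ?thesis using Q2p[of i j] by (metis mult_nonneg_nonneg less_imp_le)
  qed
  have z: "D i j * t i j = 0" for i j
  proof -
    have "\<forall>i\<in>UNIV. (\<Sum>j\<in>UNIV. D i j * t i j) = 0"
      using s0 by (subst sum_nonneg_eq_0_iff[symmetric]) (auto intro: sum_nonneg tn)
    then have "(\<Sum>j\<in>UNIV. D i j * t i j) = 0" by simp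
    then show ?thesis by (subst (asm) sum_nonneg_eq_0_iff) (auto intro: tn)
  qed
  have "Q1 $ i $ j = Q2 $ i $ j" for i j
  proof (cases "t i j = 0")
    case True then show ?thesis by (simp add: Q1e)
  next
    case False
    then have "D i j = 0" using z[of i j] by simp
    then show ?thesis by (simp add: D_def)
  qed
  then show ?thesis by (simp add: vec_eq_iff)
qed

context sk
begin

theorem sk_converges:
  obtains L where "X \<longlonglongrightarrow> L" "posm L" "scal A L" "\<And>i. rsum L i = r $ i" "\<And>j. csum L j = c $ j"
proof -
  obtain L \<sigma> where sm: "strict_mono \<sigma>" and lim: "(Y \<circ> \<sigma>) \<longlonglongrightarrow> L"
    using bounded_imp_convergent_subsequence[OF Y_bounded] by blast
  note Lp = limpt[OF sm lim[unfolded o_def]]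
  have YL: "Y \<longlonglongrightarrow> L"
  proof (rule ccontr)
    assume "\<not> Y \<longlonglongrightarrow> L"
    then obtain e where e: "e > 0" "\<forall>N. \<exists>n\<ge>N. \<not> norm (Y n - L) < e"
      unfolding LIMSEQ_iff by blast
    define S where "S = {n. \<not> norm (Y n - L) < e}"
    have "infinite S" unfolding S_def infinite_nat_iff_unbounded_le using e(2) by blast
    then obtain \<tau> :: "nat \<Rightarrow> nat" where tau: "strict_mono \<tau>" "\<And>n. \<tau> n \<in> S"
      using infinite_enumerate by blast
    have "bounded (range (Y \<circ> \<tau>))" using Y_bounded by (rule bounded_subset) auto
    then obtain Q \<sigma>2 where sm2: "strict_mono \<sigma>2" and lim2: "((Y \<circ> \<tau>) \<circ> \<sigma>2) \<longlonglongrightarrow> Q"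
      using bounded_imp_convergent_subsequence by blast
    have sm3: "strict_mono (\<tau> \<circ> \<sigma>2)" using tau(1) sm2 by (rule strict_mono_o)
    have lim3: "(\<lambda>k. Y ((\<tau> \<circ> \<sigma>2) k)) \<longlonglongrightarrow> Q" using lim2 by (simp add: o_def)
    note Qp = limpt[OF sm3 lim3]
    have "Q = L"
      by (rule scal_unique[OF pA Qp(4) Lp(4)]) (simp_all add: Qp Lp)
    with lim3 obtain N where "\<forall>n\<ge>N. norm (Y ((\<tau> \<circ> \<sigma>2) n) - L) < e"
      unfolding LIMSEQ_iff using e(1) by blast
    then have "norm (Y (\<tau> (\<sigma>2 N)) - L) < e" by simp
    moreover have "\<tau> (\<sigma>2 N) \<in> S" by (rule tau(2))
    ultimately show False by (simp add: S_def)
  qed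
  have "X \<longlonglongrightarrow> L" by (rule LIMSEQ_imp_Suc) (use YL in simp)
  then show ?thesis using that Lp by blast
qed

end




type_synonym ('n,'m) idx = "('n \<times> 'm) + ('n + 'm)"

definition skP :: "real \<Rightarrow> real^('n::finite,'m::finite) idx \<Rightarrow> 'n \<Rightarrow> 'm \<Rightarrow> real" where
  "skP lam x i j = exp (x $ Inr (Inl i) + x $ Inr (Inr j)) * x $ Inl (i, j) powr lam"

definition skG :: "real \<Rightarrow> real^('n::finite,'m::finite) idx \<Rightarrow> real^('n,'m) idx" where
  "skG lam x = (\<chi> k. case k of Inl (i, j) \<Rightarrow> x $ Inl (i, j)
      | Inr (Inl i) \<Rightarrow> (\<Sum>j\<in>UNIV. skP lam x i j) + (\<Sum>i'\<in>UNIV. x $ Inr (Inl i'))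
      | Inr (Inr j) \<Rightarrow> (\<Sum>i\<in>UNIV. skP lam x i j))"

definition skDom :: "(real^('n::finite,'m::finite) idx) set" where
  "skDom = {x. \<forall>i j. x $ Inl (i, j) > 0}"

definition skE :: "(real^'m::finite^'n::finite) \<times> (real^'n) \<times> (real^'m) \<Rightarrow> real^('n,'m) idx" where
  "skE = (\<lambda>(M, r, c). \<chi> k. case k of Inl (i, j) \<Rightarrow> M $ i $ j | Inr (Inl i) \<Rightarrow> r $ i | Inr (Inr j) \<Rightarrow> c $ j)"

definition skPV :: "real \<Rightarrow> real^('n::finite,'m::finite) idx \<Rightarrow> real^'m^'n" where
  "skPV lam x = (\<chi> i j. skP lam x i j)"

lemma idx_cases:
  obtains i j where "k = Inl (i, j)" | i where "k = Inr (Inl i)" | j where "k = Inr (Inr j)"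
  by (metis obj_sumE surj_pair)

lemma vec_idx_eq:
  fixes x y :: "real^('n::finite,'m::finite) idx"
  assumes "\<And>i j. x $ Inl (i, j) = y $ Inl (i, j)" "\<And>i. x $ Inr (Inl i) = y $ Inr (Inl i)"
    "\<And>j. x $ Inr (Inr j) = y $ Inr (Inr j)"
  shows "x = y"
proof (rule vec_eq_iff[THEN iffD2], rule allI)
  fix k :: "('n,'m) idx"
  show "x $ k = y $ k" by (cases k rule: idx_cases) (simp_all add: assms)
qed

lemma open_skDom: "open (skDom :: (real^('n::finite,'m::finite) idx) set)"
proof -
  have e: "(skDom :: (real^('n,'m) idx) set) = (\<Inter>p\<in>UNIV. {x::real^('n,'m) idx. 0 < x $ Inl p})"
    unfolding skDom_def by (rule set_eqI) (simp add: split_paired_All)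
  have o: "\<forall>p\<in>UNIV. open {x::real^('n,'m) idx. 0 < x $ Inl p}"
    by (intro ballI open_Collect_less continuous_on_const linear_continuous_on[OF bounded_linear_vec_nth])
  show ?thesis unfolding e by (rule open_INT[OF _ o]) simp
qed

lemma linear_axis: "bounded_linear (axis i :: 'a::euclidean_space \<Rightarrow> 'a^'k)"
proof -
  have "linear (axis i :: 'a \<Rightarrow> 'a^'k)"
    by (rule linearI) (simp_all add: vec_eq_iff axis_def)
  then show ?thesis by (simp add: linear_conv_bounded_linear)
qed

lemma smooth_on_vec_lambda_gen:
  fixes f :: "'i::finite \<Rightarrow> 'a::euclidean_space \<Rightarrow> 'b::euclidean_space"
  assumes "\<And>i. smooth_on S (f i)"
  shows "smooth_on S (\<lambda>x. \<chi> i. f i x)"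
proof (rule smooth_on_cong)
  show "smooth_on S (\<lambda>x. \<Sum>i\<in>UNIV. axis i (f i x))"
    by (intro smooth_on_sum smooth_on_linear_comp[OF linear_axis] assms) simp
  fix x show "(\<chi> i. f i x) = (\<Sum>i\<in>UNIV. axis i (f i x))"
    by (simp add: vec_eq_iff axis_def if_distrib sum.delta cong: if_cong)
qed

lemma smooth_skP: "smooth_on skDom (\<lambda>x. skP lam x i j)"
  unfolding skP_def
  by (intro smooth_on_mult smooth_on_exp smooth_on_add smooth_on_vec_nth smooth_on_id smooth_on_powr)
    (simp add: skDom_def)

lemma smooth_skPV: "smooth_on skDom (skPV lam)"
  unfolding skPV_def by (intro smooth_on_vec_lambda_gen smooth_on_vec_lambda smooth_skP)

lemma smooth_skG: "smooth_on (skDom :: (real^('n::finite,'m::finite) idx) set) (skG lam)"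
  unfolding skG_def
proof (intro smooth_on_vec_lambda)
  fix k :: "('n,'m) idx"
  show "smooth_on skDom (\<lambda>x. case k of Inl (i, j) \<Rightarrow> x $ Inl (i, j)
      | Inr (Inl i) \<Rightarrow> (\<Sum>j\<in>UNIV. skP lam x i j) + (\<Sum>i'\<in>UNIV. x $ Inr (Inl i'))
      | Inr (Inr j) \<Rightarrow> (\<Sum>i\<in>UNIV. skP lam x i j))"
    by (cases k rule: idx_cases)
      (simp_all add: smooth_on_vec_nth smooth_on_add smooth_on_sum smooth_skP)
qed

lemma linear_skE: "bounded_linear skE"
proof -
  have "linear skE"
    by (rule linearI) (auto simp: skE_def vec_eq_iff split: sum.splits prod.splits)
  then show ?thesis by (simp add: linear_conv_bounded_linear)
qed

lemma skG_Inl[simp]: "skG lam x $ Inl (i, j) = x $ Inl (i, j)"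
  by (simp add: skG_def)
lemma skG_Inr_Inl[simp]: "skG lam x $ Inr (Inl i) = (\<Sum>j\<in>UNIV. skP lam x i j) + (\<Sum>i'\<in>UNIV. x $ Inr (Inl i'))"
  by (simp add: skG_def)
lemma skG_Inr_Inr[simp]: "skG lam x $ Inr (Inr j) = (\<Sum>i\<in>UNIV. skP lam x i j)"
  by (simp add: skG_def)

definition skA :: "real \<Rightarrow> real^('n::finite,'m::finite) idx \<Rightarrow> real^'m^'n" where
  "skA lam x = entry_pow lam (\<chi> i j. x $ Inl (i, j))"

lemma skA_pos: "x \<in> skDom \<Longrightarrow> posm (skA lam x)"
  by (auto simp: skA_def entry_pow_def posm_def skDom_def dest: less_imp_neq[symmetric])

lemma skP_eq: "skP lam x i j = exp (x $ Inr (Inl i)) * skA lam x $ i $ j * exp (x $ Inr (Inr j))"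
  by (simp add: skP_def skA_def entry_pow_def exp_add)

lemma scal_skPV: "scal (skA lam x) (skPV lam x)"
  unfolding scal_def
  by (intro exI[of _ "\<lambda>i. exp (x $ Inr (Inl i))"] exI[of _ "\<lambda>j. exp (x $ Inr (Inr j))"])
    (simp add: skPV_def skP_eq)

lemma rsum_skPV: "rsum (skPV lam x) i = (\<Sum>j\<in>UNIV. skP lam x i j)"
  by (simp add: rsum_def skPV_def)
lemma csum_skPV: "csum (skPV lam x) j = (\<Sum>i\<in>UNIV. skP lam x i j)"
  by (simp add: csum_def skPV_def)

lemma skG_inj: "inj_on (skG lam) (skDom :: (real^('n::finite,'m::finite) idx) set)"
proof (rule inj_onI)
  fix x y :: "real^('n,'m) idx"
  assume x: "x \<in> skDom" and y: "y \<in> skDom" and e: "skG lam x = skG lam y"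
  have eM: "x $ Inl (i, j) = y $ Inl (i, j)" for i j
    using arg_cong[OF e, of "\<lambda>z. z $ Inl (i, j)"] by simp
  have eA: "skA lam x = skA lam y" unfolding skA_def using eM by simp
  define Sx where "Sx = (\<Sum>i'\<in>UNIV. x $ Inr (Inl i'))"
  define Sy where "Sy = (\<Sum>i'\<in>UNIV. y $ Inr (Inl i'))"
  have er: "rsum (skPV lam x) i + Sx = rsum (skPV lam y) i + Sy" for i
    using arg_cong[OF e, of "\<lambda>z. z $ Inr (Inl i)"] by (simp add: rsum_skPV Sx_def Sy_def)
  have ec: "csum (skPV lam x) j = csum (skPV lam y) j" for j
    using arg_cong[OF e, of "\<lambda>z. z $ Inr (Inr j)"] by (simp add: csum_skPV)
  have "(\<Sum>i\<in>UNIV. rsum (skPV lam x) i + Sx) = (\<Sum>i\<in>UNIV. rsum (skPV lam y) i + Sy)"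
    using er by simp
  then have "(\<Sum>j\<in>UNIV. csum (skPV lam x) j) + real CARD('n) * Sx = (\<Sum>j\<in>UNIV. csum (skPV lam y) j) + real CARD('n) * Sy"
    by (simp add: sum.distrib total_sum)
  then have "real CARD('n) * Sx = real CARD('n) * Sy" using ec by simp
  then have SS: "Sx = Sy" by simp
  have PP: "skPV lam x = skPV lam y"
  proof (rule scal_unique[OF skA_pos[OF x] scal_skPV])
    show "scal (skA lam x) (skPV lam y)" using scal_skPV[of lam y] eA by simp
    show "rsum (skPV lam x) i = rsum (skPV lam y) i" for i using er[of i] SS by simp
    show "csum (skPV lam x) j = csum (skPV lam y) j" for j by (rule ec)
  qed
  have uv: "x $ Inr (Inl i) + x $ Inr (Inr j) = y $ Inr (Inl i) + y $ Inr (Inr j)" for i j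
  proof -
    have "skP lam x i j = skP lam y i j" using arg_cong[OF PP, of "\<lambda>z. z $ i $ j"] by (simp add: skPV_def)
    moreover have "x $ Inl (i, j) powr lam > 0" using x by (auto simp: skDom_def dest: less_imp_neq[symmetric])
    ultimately have "exp (x $ Inr (Inl i) + x $ Inr (Inr j)) = exp (y $ Inr (Inl i) + y $ Inr (Inr j))"
      by (simp add: skP_def eM)
    then show ?thesis by simp
  qed
  obtain j0 :: 'm where True by blast
  obtain i0 :: 'n where True by blast
  define d where "d = y $ Inr (Inr j0) - x $ Inr (Inr j0)"
  have du: "x $ Inr (Inl i) - y $ Inr (Inl i) = d" for i using uv[of i j0] by (simp add: d_def)
  have "Sx - Sy = real CARD('n) * d"
    unfolding Sx_def Sy_def sum_subtractf[symmetric] du by simp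
  then have "d = 0" using SS by simp
  then have eu: "x $ Inr (Inl i) = y $ Inr (Inl i)" for i using du[of i] by simp
  have ev: "x $ Inr (Inr j) = y $ Inr (Inr j)" for j using uv[of i0 j] eu[of i0] by simp
  show "x = y" by (rule vec_idx_eq[OF eM eu ev])
qed

lemma vn_deriv: "((\<lambda>z. z $ k) has_derivative (\<lambda>h. h $ k)) (at x)"
  by (rule bounded_linear_imp_has_derivative[OF bounded_linear_vec_nth])

lemma skP_deriv:
  assumes x: "x \<in> skDom"
  shows "((\<lambda>z. skP lam z i j) has_derivative
     (\<lambda>h. exp (x $ Inr (Inl i) + x $ Inr (Inr j)) * (h $ Inl (i, j) * (lam * x $ Inl (i, j) powr (lam - 1)))
        + (h $ Inr (Inl i) + h $ Inr (Inr j)) * exp (x $ Inr (Inl i) + x $ Inr (Inr j)) * x $ Inl (i, j) powr lam)) (at x)"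
proof -
  have pos: "x $ Inl (i, j) > 0" using x by (simp add: skDom_def)
  have e1: "((\<lambda>z. exp (z $ Inr (Inl i) + z $ Inr (Inr j))) has_derivative
      (\<lambda>h. (h $ Inr (Inl i) + h $ Inr (Inr j)) * exp (x $ Inr (Inl i) + x $ Inr (Inr j)))) (at x)"
    by (rule has_derivative_exp[OF has_derivative_add[OF vn_deriv vn_deriv]])
  have e2: "((\<lambda>z. z $ Inl (i, j) powr lam) has_derivative
      (\<lambda>h. h $ Inl (i, j) * (lam * x $ Inl (i, j) powr (lam - 1)))) (at x)"
    by (rule DERIV_compose_FDERIV[OF has_real_derivative_powr[OF pos] vn_deriv])
  show ?thesis unfolding skP_def by (rule has_derivative_mult[OF e1 e2])
qed

lemma skG_deriv_inj:
  assumes x: "x \<in> (skDom :: (real^('n::finite,'m::finite) idx) set)" and d: "(skG lam has_derivative G') (at x)"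
  shows "inj G'"
proof -
  have lin: "linear G'" using d by (rule has_derivative_linear)
  have comp: "((\<lambda>z. skG lam z $ k) has_derivative (\<lambda>h. G' h $ k)) (at x)" for k
    by (rule bounded_linear.has_derivative[OF bounded_linear_vec_nth d])
  define E where "E i j = exp (x $ Inr (Inl i) + x $ Inr (Inr j))" for i j
  define dP where "dP h i j = E i j * (h $ Inl (i, j) * (lam * x $ Inl (i, j) powr (lam - 1)))
        + (h $ Inr (Inl i) + h $ Inr (Inr j)) * E i j * x $ Inl (i, j) powr lam" for h i j
  have dPd: "((\<lambda>z. skP lam z i j) has_derivative (\<lambda>h. dP h i j)) (at x)" for i j
    unfolding dP_def E_def by (rule skP_deriv[OF x])
  have cInl: "G' h $ Inl (i, j) = h $ Inl (i, j)" for h i j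
  proof -
    have "((\<lambda>z. skG lam z $ Inl (i, j)) has_derivative (\<lambda>h. h $ Inl (i, j))) (at x)"
      by (simp add: vn_deriv)
    from has_derivative_unique[OF comp this] show ?thesis by metis
  qed
  have cRow: "G' h $ Inr (Inl i) = (\<Sum>j\<in>UNIV. dP h i j) + (\<Sum>i'\<in>UNIV. h $ Inr (Inl i'))" for h i
  proof -
    have "((\<lambda>z. skG lam z $ Inr (Inl i)) has_derivative (\<lambda>h. (\<Sum>j\<in>UNIV. dP h i j) + (\<Sum>i'\<in>UNIV. h $ Inr (Inl i')))) (at x)"
      unfolding skG_Inr_Inl by (intro has_derivative_add has_derivative_sum dPd vn_deriv)
    from has_derivative_unique[OF comp this] show ?thesis by metis
  qed
  have cCol: "G' h $ Inr (Inr j) = (\<Sum>i\<in>UNIV. dP h i j)" for h j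
  proof -
    have "((\<lambda>z. skG lam z $ Inr (Inr j)) has_derivative (\<lambda>h. (\<Sum>i\<in>UNIV. dP h i j))) (at x)"
      unfolding skG_Inr_Inr by (intro has_derivative_sum dPd)
    from has_derivative_unique[OF comp this] show ?thesis by metis
  qed
  show ?thesis
    unfolding linear_injective_0[OF lin]
  proof (intro allI impI)
    fix h assume h0: "G' h = 0"
    have hM: "h $ Inl (i, j) = 0" for i j using cInl[of h i j] h0 by simp
    define a where "a i = h $ Inr (Inl i)" for i
    define b where "b j = h $ Inr (Inr j)" for j
    define P where "P i j = skP lam x i j" for i j
    have Pp: "P i j > 0" for i j
    proof -
      have "x $ Inl (i, j) > 0" using x by (simp add: skDom_def)
      then show ?thesis unfolding P_def skP_def by simp
    qed
    have dPe: "dP h i j = P i j * (a i + b j)" for i j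
      by (simp add: dP_def hM a_def b_def P_def skP_def E_def)
    define Sa where "Sa = (\<Sum>i\<in>UNIV. a i)"
    have row: "(\<Sum>j\<in>UNIV. P i j * (a i + b j)) = - Sa" for i
      using cRow[of h i] h0 by (simp add: dPe Sa_def a_def eq_neg_iff_add_eq_0)
    have col: "(\<Sum>i\<in>UNIV. P i j * (a i + b j)) = 0" for j
      using cCol[of h j] h0 by (simp add: dPe)
    have "(\<Sum>i\<in>UNIV. \<Sum>j\<in>UNIV. P i j * (a i + b j)^2)
        = (\<Sum>i\<in>UNIV. \<Sum>j\<in>UNIV. a i * (P i j * (a i + b j))) + (\<Sum>i\<in>UNIV. \<Sum>j\<in>UNIV. b j * (P i j * (a i + b j)))"
      by (simp add: sum.distrib[symmetric] power2_eq_square algebra_simps)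
    also have "(\<Sum>i\<in>UNIV. \<Sum>j\<in>UNIV. a i * (P i j * (a i + b j))) = (\<Sum>i\<in>UNIV. a i * (- Sa))"
      by (simp add: sum_distrib_left[symmetric] row)
    also have "(\<Sum>i\<in>UNIV. \<Sum>j\<in>UNIV. b j * (P i j * (a i + b j))) = 0"
      by (subst sum.swap) (simp add: sum_distrib_left[symmetric] col)
    finally have Q: "(\<Sum>i\<in>UNIV. \<Sum>j\<in>UNIV. P i j * (a i + b j)^2) = - (Sa * Sa)"
      by (simp add: sum_negf sum_distrib_right[symmetric] Sa_def)
    have Qn: "(\<Sum>i\<in>UNIV. \<Sum>j\<in>UNIV. P i j * (a i + b j)^2) \<ge> 0"
      using Pp by (intro sum_nonneg mult_nonneg_nonneg) (auto intro: less_imp_le)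
    have "Sa * Sa \<ge> 0" by simp
    then have Q0: "(\<Sum>i\<in>UNIV. \<Sum>j\<in>UNIV. P i j * (a i + b j)^2) = 0" and "Sa * Sa = 0"
      using Q Qn by linarith+
    then have Sa0: "Sa = 0" by simp
    have z: "a i + b j = 0" for i j
    proof -
      have tn: "P i j * (a i + b j)^2 \<ge> 0" for i j using Pp[of i j] by simp
      have "\<forall>i\<in>UNIV. (\<Sum>j\<in>UNIV. P i j * (a i + b j)^2) = 0"
        using Q0 by (subst sum_nonneg_eq_0_iff[symmetric]) (auto intro: sum_nonneg tn)
      then have "(\<Sum>j\<in>UNIV. P i j * (a i + b j)^2) = 0" by simp
      then have "P i j * (a i + b j)^2 = 0" by (subst (asm) sum_nonneg_eq_0_iff) (auto intro: tn)
      then show ?thesis using Pp[of i j] by simp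
    qed
    obtain j0 :: 'm where True by blast
    obtain i0 :: 'n where True by blast
    have ai: "a i = - b j0" for i using z[of i j0] by simp
    have "Sa = real CARD('n) * (- b j0)" unfolding Sa_def ai by simp
    then have "b j0 = 0" using Sa0 by simp
    then have a0: "a i = 0" for i using ai by simp
    have b0: "b j = 0" for j using z[of i0 j] a0[of i0] by simp
    show "h = 0"
      by (rule vec_idx_eq) (use hM a0 b0 in \<open>simp_all add: a_def b_def\<close>)
  qed
qed

lemma skE_Inl[simp]: "skE (M, r, c) $ Inl (i, j) = M $ i $ j" by (simp add: skE_def)
lemma skE_Inr_Inl[simp]: "skE (M, r, c) $ Inr (Inl i) = r $ i" by (simp add: skE_def)
lemma skE_Inr_Inr[simp]: "skE (M, r, c) $ Inr (Inr j) = c $ j" by (simp add: skE_def)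

lemma exists_pre:
  fixes M :: "real^'m::finite^'n::finite" and r :: "real^'n" and c :: "real^'m"
  assumes "(M, r, c) \<in> pos_matrices \<times> pos_simplex \<times> pos_simplex"
  shows "\<exists>x\<in>skDom. skG lam x = skE (M, r, c) \<and> skPV lam x = Phi lam (M, r, c)"
proof -
  have Mp: "M $ i $ j > 0" for i j using assms by (simp add: pos_matrices_def)
  have rp: "r $ i > 0" for i using assms by (simp add: pos_simplex_def)
  have cp: "c $ j > 0" for j using assms by (simp add: pos_simplex_def)
  have rs: "(\<Sum>i\<in>UNIV. r $ i) = 1" using assms by (simp add: pos_simplex_def)
  have cs: "(\<Sum>j\<in>UNIV. c $ j) = 1" using assms by (simp add: pos_simplex_def)
  define A where "A = entry_pow lam M"
  have pA: "posm A" unfolding A_def posm_def entry_pow_def using Mp by (auto dest: less_imp_neq[symmetric])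
  interpret sk A r c by (unfold_locales) (use pA rp cp rs cs in auto)
  have "\<exists>L. X \<longlonglongrightarrow> L \<and> posm L \<and> scal A L \<and> (\<forall>i. rsum L i = r $ i) \<and> (\<forall>j. csum L j = c $ j)"
    by (rule sk_converges) blast
  then obtain L where L: "X \<longlonglongrightarrow> L" "posm L" "scal A L" "\<And>i. rsum L i = r $ i" "\<And>j. csum L j = c $ j"
    by blast
  have LL: "sinkhorn_iter r c (entry_pow lam M) \<longlonglongrightarrow> L" using L(1) unfolding A_def .
  have PhiL: "Phi lam (M, r, c) = L"
    unfolding Phi_def sinkhorn_limit_def using LL by (simp add: limI)
  obtain al be where ab: "\<forall>i. al i > 0" "\<forall>j. be j > 0" "\<forall>i j. L $ i $ j = al i * A $ i $ j * be j"
    using L(3) unfolding scal_def by blast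
  define s where "s = (\<Sum>i\<in>UNIV. ln (al i)) / real CARD('n)"
  define x :: "real^('n,'m) idx" where "x = (\<chi> k. case k of Inl (i, j) \<Rightarrow> M $ i $ j
     | Inr (Inl i) \<Rightarrow> ln (al i) - s | Inr (Inr j) \<Rightarrow> ln (be j) + s)"
  have xI[simp]: "x $ Inl (i, j) = M $ i $ j" for i j by (simp add: x_def)
  have xu[simp]: "x $ Inr (Inl i) = ln (al i) - s" for i by (simp add: x_def)
  have xv[simp]: "x $ Inr (Inr j) = ln (be j) + s" for j by (simp add: x_def)
  have xD: "x \<in> skDom" by (simp add: skDom_def Mp)
  have Pe: "skP lam x i j = L $ i $ j" for i j
  proof -
    have "exp (ln (al i) - s + (ln (be j) + s)) = al i * be j"
      using ab by (simp add: exp_add exp_diff)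
    then show ?thesis using ab by (simp add: skP_def A_def entry_pow_def)
  qed
  have PV: "skPV lam x = L" by (simp add: skPV_def Pe vec_eq_iff)
  have Su: "(\<Sum>i\<in>UNIV. x $ Inr (Inl i)) = 0"
    by (simp add: sum_subtractf s_def)
  have "skG lam x = skE (M, r, c)"
  proof (rule vec_idx_eq)
    show "skG lam x $ Inr (Inl i) = skE (M, r, c) $ Inr (Inl i)" for i
      using Su L(4)[of i] by (simp add: Pe rsum_def del: xu)
    show "skG lam x $ Inr (Inr j) = skE (M, r, c) $ Inr (Inr j)" for j
      using L(5)[of j] by (simp add: Pe csum_def)
  qed simp
  then show ?thesis by (intro bexI[OF _ xD] conjI) (simp_all add: PV PhiL)
qed

theorem main_smooth:
  fixes lam :: real
  shows "smooth_on (pos_matrices \<times> (pos_simplex :: (real^'n::finite) set) \<times> (pos_simplex :: (real^'m::finite) set))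
           (Phi lam :: (real^'m^'n) \<times> (real^'n) \<times> (real^'m) \<Rightarrow> real^'m^'n)"
proof -
  let ?S = "(pos_matrices :: (real^'m^'n) set) \<times> (pos_simplex :: (real^'n) set) \<times> (pos_simplex :: (real^'m) set)"
  let ?D = "skDom :: (real^('n,'m) idx) set"
  define g where "g = inv_into ?D (skG lam)"
  define V where "V = skG lam ` ?D"
  have sg: "smooth_on V g"
    unfolding V_def g_def
    by (rule smooth_on_inverse_fun[OF open_skDom smooth_skG skG_inj skG_deriv_inj])
  have gV: "g ` V \<subseteq> ?D" unfolding g_def V_def by (auto simp: inv_into_into)
  have s1: "smooth_on V (\<lambda>y. skPV lam (g y))"
    by (rule smooth_on_compose[OF smooth_skPV sg gV])
  have EV: "skE ` ?S \<subseteq> V"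
  proof
    fix y assume "y \<in> skE ` ?S"
    then obtain z where z: "z \<in> ?S" "y = skE z" by blast
    obtain M :: "real^'m^'n" and r :: "real^'n" and c :: "real^'m" where zz: "z = (M, r, c)" by (cases z) auto
    obtain x where "x \<in> ?D" "skG lam x = skE (M, r, c)"
      using exists_pre[of M r c lam] z(1) zz by blast
    then show "y \<in> V" unfolding V_def z(2) zz by (metis image_eqI)
  qed
  have s2: "smooth_on ?S (\<lambda>z. skPV lam (g (skE z)))"
    by (rule smooth_on_compose[OF s1 smooth_on_linear[OF linear_skE] EV])
  show ?thesis
  proof (rule smooth_on_cong[OF s2])
    fix z assume zS: "z \<in> ?S"
    obtain M :: "real^'m^'n" and r :: "real^'n" and c :: "real^'m" where zz: "z = (M, r, c)" by (cases z) auto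
    obtain x where x: "x \<in> ?D" "skG lam x = skE (M, r, c)" "skPV lam x = Phi lam (M, r, c)"
      using exists_pre[of M r c lam] zS zz by blast
    have "g (skE z) = x" unfolding g_def zz x(2)[symmetric] by (rule inv_into_f_f[OF skG_inj x(1)])
    then show "Phi lam z = skPV lam (g (skE z))" using x(3) zz by simp
  qed
qed


theorem theorem1:
  fixes lam :: real
  assumes "lam > 0"
  shows "smooth_on (pos_matrices \<times> (pos_simplex :: (real^'n) set) \<times> (pos_simplex :: (real^'m) set))
           (Phi lam :: (real^'m^'n) \<times> (real^'n) \<times> (real^'m) \<Rightarrow> real^'m^'n)"
  by (rule main_smooth)

end
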